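(* Let $G=(V,\mathcal E,w)$ be an undirected, connected, weighted graph on $n$ nodes. Let: - $E\in\mathbb R^{n\times|\mathcal E|}$ be its signed incidence matrix (arbitrary orientation); - $W=\mathrm{diag}(w(e))_{e\in\mathcal E}$; - $L=EWE^T$, with largest eigenvalue $\lambda_n$. Let $\tau\ge0$ with $\tau\lambda_n<\pi/2$. Consider the consensus network with communication channel noise $$\dot x_i=\sum_{e=\{i,j\}\in\mathcal E}a_{ij}\big(x_j(t-\tau)-x_i(t-\tau)+\xi_e(t)\big),$$ that is, $$\dot x(t)=-L\,x(t-\tau)+EW\,\xi(t),\qquad y=M_nx,$$ where $(\xi_e)_{e\in\mathcal E}$ are mutually independent zero-mean Gaussian white noises with intensities $\sigma_e^2$. Then for every link $e=\{i,j\}\in\mathcal E$, $$\nu_e=\frac12\,w(e)^2\,r_e\Big(L\cos(\tau L)^{-1}\big(M_n-\sin(\tau L)\big)\Big).$$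
   Context: Notation: - $a_{ij}=w(\{i,j\})$. - $M_n=I_n-\frac1n\mathbf1\mathbf1^T$. - $X^\dagger$ is the Moore–Penrose pseudo-inverse. - $\cos(X)$ and $\sin(X)$ are the matrix power-series functions; $\cos(\tau L)$ is invertible since $\tau\lambda_n<\pi/2$. - For a symmetric matrix $X$ and $e=\{i,j\}$, $r_e(X)=[X^\dagger]_{ii}+[X^\dagger]_{jj}-2[X^\dagger]_{ij}$. The performance is $$\rho_{ss}=\lim_{t\to\infty}\mathbb E[y^Ty]=\frac1{2\pi}\int\mathrm{Tr}[G(j\omega)^HG(j\omega)]d\omega,\qquad G(s)=M_n(sI+e^{-\tau s}L)^{-1}EW\,\mathrm{diag}(\sigma_e).$$ The link centrality is $\nu_e=\partial\rho_{ss}/\partial\sigma_e^2$. *)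

theory Defs
  imports "HOL-Analysis.Analysis"
begin

(* Matrices are HOL-Analysis matrices  'a^'c^'r  (r rows, c columns).
   Vertices of the graph are the elements of a finite type 'n,
   edges are the elements of a finite type 'e; each edge e has an
   (arbitrary) orientation  src e -> dst e. *)

definition simple_graph :: "('e::finite \<Rightarrow> 'n::finite) \<Rightarrow> ('e \<Rightarrow> 'n) \<Rightarrow> bool" where
  "simple_graph src dst \<longleftrightarrow>
     (\<forall>e. src e \<noteq> dst e) \<and>
     (\<forall>e f. {src e, dst e} = {src f, dst f} \<longrightarrow> e = f)"

definition adj_rel :: "('e::finite \<Rightarrow> 'n::finite) \<Rightarrow> ('e \<Rightarrow> 'n) \<Rightarrow> ('n \<times> 'n) set" where
  "adj_rel src dst = {(src e, dst e) | e. True} \<union> {(dst e, src e) | e. True}"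

definition graph_connected :: "('e::finite \<Rightarrow> 'n::finite) \<Rightarrow> ('e \<Rightarrow> 'n) \<Rightarrow> bool" where
  "graph_connected src dst \<longleftrightarrow> (\<forall>u v. (u, v) \<in> (adj_rel src dst)\<^sup>*)"

definition incidence :: "('e::finite \<Rightarrow> 'n::finite) \<Rightarrow> ('e \<Rightarrow> 'n) \<Rightarrow> real^'e^'n" where
  "incidence src dst = (\<chi> i e. if i = src e then 1 else if i = dst e then -1 else 0)"

definition diag_mat :: "('e::finite \<Rightarrow> 'a::zero) \<Rightarrow> 'a^'e^'e" where
  "diag_mat d = (\<chi> i j. if i = j then d i else 0)"

definition laplacian :: "('e::finite \<Rightarrow> 'n::finite) \<Rightarrow> ('e \<Rightarrow> 'n) \<Rightarrow> ('e \<Rightarrow> real) \<Rightarrow> real^'n^'n" where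
  "laplacian src dst w =
     incidence src dst ** diag_mat w ** transpose (incidence src dst)"

definition eigenvalues :: "real^'n^'n \<Rightarrow> real set" where
  "eigenvalues A = {c. \<exists>v. v \<noteq> 0 \<and> A *v v = c *\<^sub>R v}"

definition largest_eigenvalue :: "real^'n^'n \<Rightarrow> real" where
  "largest_eigenvalue A = Max (eigenvalues A)"

definition centering :: "real^'n::finite^'n" where
  "centering = mat 1 - (1 / real CARD('n)) *\<^sub>R (\<chi> i j. 1)"

fun mpow :: "'a::semiring_1^'n::finite^'n \<Rightarrow> nat \<Rightarrow> 'a^'n^'n" where
  "mpow A 0 = mat 1"
| "mpow A (Suc k) = A ** mpow A k"

definition mat_cos :: "real^'n::finite^'n \<Rightarrow> real^'n^'n" where
  "mat_cos X = (\<Sum>k. ((-1) ^ k / fact (2 * k)) *\<^sub>R mpow X (2 * k))"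

definition mat_sin :: "real^'n::finite^'n \<Rightarrow> real^'n^'n" where
  "mat_sin X = (\<Sum>k. ((-1) ^ k / fact (2 * k + 1)) *\<^sub>R mpow X (2 * k + 1))"

definition pinv :: "real^'m::finite^'n::finite \<Rightarrow> real^'n^'m" where
  "pinv X = (THE Y. X ** Y ** X = X \<and> Y ** X ** Y = Y \<and>
                    transpose (X ** Y) = X ** Y \<and> transpose (Y ** X) = Y ** X)"

definition r_eff :: "real^'n::finite^'n \<Rightarrow> 'n \<Rightarrow> 'n \<Rightarrow> real" where
  "r_eff X i j = pinv X $ i $ i + pinv X $ j $ j - 2 * pinv X $ i $ j"

definition cmat :: "real^'c::finite^'r::finite \<Rightarrow> complex^'c^'r" where
  "cmat A = (\<chi> i j. complex_of_real (A $ i $ j))"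

definition conj_transpose :: "complex^'c::finite^'r::finite \<Rightarrow> complex^'r^'c" where
  "conj_transpose A = (\<chi> i j. cnj (A $ j $ i))"

text \<open>Transfer function G(s) = M_n (sI + e^{-tau s} L)^{-1} E W diag(sigma_e),
  with the noise intensities given as sigma2 e = sigma_e^2 (sigma_e = sqrt (sigma2 e)).\<close>
definition transfer :: "('e::finite \<Rightarrow> 'n::finite) \<Rightarrow> ('e \<Rightarrow> 'n) \<Rightarrow> ('e \<Rightarrow> real) \<Rightarrow> real
     \<Rightarrow> ('e \<Rightarrow> real) \<Rightarrow> complex \<Rightarrow> complex^'e^'n" where
  "transfer src dst w \<tau> sigma2 s =
     cmat centering **
     matrix_inv (mat s + mat (exp (- complex_of_real \<tau> * s)) ** cmat (laplacian src dst w)) **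
     cmat (incidence src dst ** diag_mat w ** diag_mat (\<lambda>e. sqrt (sigma2 e)))"

definition rho_ss :: "('e::finite \<Rightarrow> 'n::finite) \<Rightarrow> ('e \<Rightarrow> 'n) \<Rightarrow> ('e \<Rightarrow> real) \<Rightarrow> real
     \<Rightarrow> ('e \<Rightarrow> real) \<Rightarrow> real" where
  "rho_ss src dst w \<tau> sigma2 =
     (1 / (2 * pi)) * integral UNIV (\<lambda>\<omega>::real.
        Re (trace (conj_transpose (transfer src dst w \<tau> sigma2 (\<i> * complex_of_real \<omega>))
                   ** transfer src dst w \<tau> sigma2 (\<i> * complex_of_real \<omega>))))"

end

theory Submission
  imports Defs "HOL-Complex_Analysis.Complex_Analysis"
begin


definition Ach :: "real \<Rightarrow> real \<Rightarrow> complex \<Rightarrow> complex" where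
  "Ach l t s = s + of_real l * exp (- of_real t * s)"

lemma Ach_nonzero:
  assumes l: "l > 0" and t: "t \<ge> 0" and lt: "l * t < pi/2" and s: "Re s \<ge> 0"
  shows "Ach l t s \<noteq> 0"
proof
  assume h: "Ach l t s = 0"
  hence eq: "s = - (of_real l * exp (- of_real t * s))" unfolding Ach_def by (simp add: add_eq_0_iff2)
  have "cmod s = l * exp (- t * Re s)" using l by (subst eq) (simp add: norm_mult)
  also have "\<dots> \<le> l" using l t s by (simp add: mult_nonneg_nonneg)
  finally have cs: "cmod s \<le> l" .
  have "\<bar>Im s\<bar> \<le> l" using abs_Im_le_cmod[of s] cs by linarith
  hence "\<bar>t * Im s\<bar> \<le> t * l" using t by (simp add: abs_mult mult_left_mono)
  hence "\<bar>t * Im s\<bar> < pi/2" using lt by (simp add: mult.commute)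
  hence cpos: "cos (t * Im s) > 0" by (intro cos_gt_zero_pi) auto
  have "Re s = - l * (exp (- t * Re s) * cos (t * Im s))"
    by (subst eq) (simp add: Re_exp Im_exp)
  also have "\<dots> < 0" using l cpos by (simp add: mult_pos_pos)
  finally show False using s by simp
qed

locale scal =
  fixes l t :: real
  assumes lpos: "l > 0" and tnn: "t \<ge> 0" and ltb: "l * t < pi/2"
begin

definition "th = l * t"
definition "aa = cos th / (2 * l * (1 - sin th))"
definition "Nf s = of_real aa * s * Ach l t s - (s - of_real l * exp (- of_real t * s)) / 2"

lemma th_bounds: "0 \<le> th" "th < pi/2" using lpos tnn ltb by (auto simp: th_def)
lemma sin_th_lt: "sin th < 1"
proof -
  have "sin th < sin (pi/2)" using th_bounds by (intro sin_monotone_2pi) auto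
  thus ?thesis by simp
qed
lemma cos_th_pos: "cos th > 0" using th_bounds by (intro cos_gt_zero_pi) auto

lemma Nf_zero:
  assumes "s^2 + (of_real l)^2 = 0"
  shows "Nf s = 0"
proof -
  have "(s - \<i> * of_real l) * (s + \<i> * of_real l) = 0" using assms
    by (simp add: algebra_simps power2_eq_square)
  hence "s = \<i> * of_real l \<or> s = - (\<i> * of_real l)" by (auto simp: add_eq_0_iff2)
  moreover have c2: "(cos (l*t))^2 + (sin (l*t))^2 = 1" by simp
  moreover have "1 - sin (l*t) \<noteq> 0" using sin_th_lt by (simp add: th_def)
  ultimately show ?thesis
    apply (auto simp: Nf_def Ach_def complex_eq_iff Re_exp Im_exp aa_def th_def mult.commute[of t])
    apply (simp_all add: field_simps)
    apply (simp_all add: cos_squared_eq[unfolded power2_eq_square] algebra_simps)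
    done
qed

definition "Rt s = (if s^2 + (of_real l)^2 = 0 then deriv Nf s / (2 * s * Ach l t s)
                     else Nf s / ((s^2 + (of_real l)^2) * Ach l t s))"

lemma Re_Nf_axis:
  "Re (Nf (\<i> * of_real w) * cnj (Ach l t (\<i> * of_real w))) = (l^2 - w^2) / 2"
proof -
  have c2: "(cos (t*w))^2 + (sin (t*w))^2 = 1" by simp
  show ?thesis
    apply (simp add: Nf_def Ach_def Re_exp Im_exp algebra_simps power2_eq_square)
    apply (simp add: cos_squared_eq[unfolded power2_eq_square] algebra_simps field_simps)
    done
qed

lemma Rt_axis:
  assumes "w^2 \<noteq> l^2"
  shows "2 * Re (Rt (\<i> * of_real w)) = 1 / (cmod (Ach l t (\<i> * of_real w)))^2"
proof -
  define s where "s = \<i> * of_real w"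
  define A where "A = Ach l t s"
  have A0: "A \<noteq> 0" unfolding A_def s_def using Ach_nonzero lpos tnn ltb by simp
  have ne: "s^2 + (of_real l)^2 \<noteq> 0" using assms
    by (auto simp: s_def power2_eq_square complex_eq_iff)
  have sl: "s^2 + (of_real l)^2 = of_real (l^2 - w^2)" by (simp add: s_def power_mult_distrib)
  have AA: "A * cnj A = of_real ((cmod A)^2)" using complex_norm_square[of A] by simp
  have "Rt s = Nf s / (of_real (l^2 - w^2) * A)"
    using ne unfolding Rt_def A_def sl by simp
  also have "\<dots> = (Nf s * cnj A) / (of_real (l^2 - w^2) * (A * cnj A))"
    using A0 by (simp add: mult.assoc)
  also have "\<dots> = Nf s * cnj A / of_real ((l^2 - w^2) * (cmod A)^2)"
    unfolding AA by simp
  finally have "Rt s = Nf s * cnj A / of_real ((l^2 - w^2) * (cmod A)^2)" .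
  hence "Re (Rt s) = Re (Nf s * cnj A) / ((l^2 - w^2) * (cmod A)^2)"
    by (simp add: Re_divide_of_real)
  also have "\<dots> = ((l^2 - w^2) / 2) / ((l^2 - w^2) * (cmod A)^2)"
    by (simp only: A_def s_def Re_Nf_axis)
  also have "\<dots> = 1 / (2 * (cmod A)^2)"
    using assms A0 by (simp add: field_simps)
  finally show ?thesis by (simp add: A_def s_def)
qed


lemma Nf_holo: "Nf holomorphic_on UNIV"
proof -
  have "(\<lambda>s. of_real aa * s * (s + of_real l * exp (- of_real t * s)) - (s - of_real l * exp (- of_real t * s)) / 2)
        holomorphic_on UNIV" by (intro holomorphic_intros) auto
  thus ?thesis by (rule holomorphic_transform) (simp add: Nf_def Ach_def)
qed

lemma Nf_cont: "isCont Nf x"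
  using Nf_holo holomorphic_on_imp_continuous_on continuous_on_eq_continuous_at by blast

lemma Nf_deriv: "(Nf has_field_derivative deriv Nf x) (at x)"
  using Nf_holo holomorphic_on_imp_differentiable_at DERIV_deriv_iff_field_differentiable by blast

lemma Ach_cont: "isCont (Ach l t) x"
  unfolding Ach_def by (intro continuous_intros)

lemma Ach_holo: "Ach l t holomorphic_on S"
proof -
  have "(\<lambda>s. s + of_real l * exp (- of_real t * s)) holomorphic_on S" by (intro holomorphic_intros)
  thus ?thesis by (rule holomorphic_transform) (simp add: Ach_def)
qed

lemma sq_zero_Re: "s^2 + (of_real l)^2 = 0 \<Longrightarrow> Re s = 0"
proof -
  assume "s^2 + (of_real l)^2 = 0"
  hence "(s - \<i> * of_real l) * (s + \<i> * of_real l) = 0"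
    by (simp add: algebra_simps power2_eq_square)
  hence "s = \<i> * of_real l \<or> s = - (\<i> * of_real l)" by (auto simp: add_eq_0_iff2)
  thus "Re s = 0" by auto
qed

lemma Rt_holo: "Rt holomorphic_on {s. 0 < Re s}"
proof -
  have "(\<lambda>s. Nf s / ((s^2 + (of_real l)^2) * Ach l t s)) holomorphic_on {s. 0 < Re s}"
    using Ach_nonzero[OF lpos tnn ltb] sq_zero_Re
    by (intro holomorphic_intros holomorphic_on_subset[OF Nf_holo] Ach_holo) force+
  thus ?thesis by (rule holomorphic_transform) (auto simp: Rt_def dest: sq_zero_Re)
qed

lemma Rt_cont: "continuous_on {s. 0 \<le> Re s} Rt"
  unfolding continuous_on_eq_continuous_within
proof
  fix x assume x: "x \<in> {s. 0 \<le> Re s}"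
  have Ax: "Ach l t x \<noteq> 0" using x Ach_nonzero[OF lpos tnn ltb] by simp
  show "continuous (at x within {s. 0 \<le> Re s}) Rt"
  proof (cases "x^2 + (of_real l)^2 = 0")
    case False
    have op: "open {s::complex. s^2 + (of_real l)^2 \<noteq> 0}"
      by (intro open_Collect_neq continuous_intros)
    have ev: "eventually (\<lambda>s. s^2 + (of_real l)^2 \<noteq> 0) (nhds x)"
      using eventually_nhds_in_open[OF op] False by simp
    have cc: "isCont (\<lambda>s. Nf s / ((s^2 + (of_real l)^2) * Ach l t s)) x"
      using False Ax by (intro continuous_intros Nf_cont Ach_cont) auto
    have eq: "eventually (\<lambda>s. Nf s / ((s^2 + (of_real l)^2) * Ach l t s) = Rt s) (nhds x)"
      using ev by eventually_elim (simp add: Rt_def)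
    have "isCont Rt x" using isCont_cong[OF eq] cc by simp
    thus ?thesis using continuous_at_imp_continuous_at_within by blast
  next
    case True
    have x0: "x \<noteq> 0" using True lpos by auto
    have Nx: "Nf x = 0" using Nf_zero[OF True] .
    let ?S = "{s. 0 \<le> Re s}"
    have d: "((\<lambda>y. (Nf y - Nf x) / (y - x)) \<longlongrightarrow> deriv Nf x) (at x within ?S)"
      using Nf_deriv[of x] has_field_derivative_iff has_field_derivative_at_within by blast
    have c: "((\<lambda>y. (y + x) * Ach l t y) \<longlongrightarrow> (x + x) * Ach l t x) (at x within ?S)"
      using Ach_cont[of x] by (intro tendsto_intros) (auto simp: isCont_def intro: tendsto_within_subset)
    have lim: "((\<lambda>y. (Nf y - Nf x) / (y - x) / ((y + x) * Ach l t y)) \<longlongrightarrow> deriv Nf x / ((x + x) * Ach l t x)) (at x within ?S)"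
      using x0 Ax by (intro tendsto_divide d c) auto
    have e1: "eventually (\<lambda>y. y \<noteq> -x) (at x within ?S)"
      using x0 by (intro tendsto_imp_eventually_ne[OF tendsto_ident_at]) auto
    have e2: "eventually (\<lambda>y. y \<noteq> x) (at x within ?S)"
      by (simp add: eventually_at_filter)
    have ev2: "eventually (\<lambda>y. (Nf y - Nf x) / (y - x) / ((y + x) * Ach l t y) = Rt y) (at x within ?S)"
      using e1 e2
    proof eventually_elim
      case (elim y)
      have xx: "x^2 = - ((of_real l)^2)" using True by (simp add: add_eq_0_iff2)
      have yy: "y^2 + (of_real l)^2 = (y - x) * (y + x)" using xx by (simp add: algebra_simps power2_eq_square)
      moreover have "(y - x) * (y + x) \<noteq> 0" using elim by (auto simp: add_eq_0_iff2)
      ultimately have "Rt y = Nf y / (((y - x) * (y + x)) * Ach l t y)" by (simp add: Rt_def)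
      thus ?case by (simp add: Nx divide_divide_eq_left mult.assoc)
    qed
    have "(Rt \<longlongrightarrow> deriv Nf x / ((x + x) * Ach l t x)) (at x within ?S)"
      by (rule Lim_transform_eventually[OF lim ev2])
    moreover have "Rt x = deriv Nf x / ((x + x) * Ach l t x)" using True unfolding Rt_def
      by (simp only: if_True mult_2 simp_thms)
    ultimately have "(Rt \<longlongrightarrow> Rt x) (at x within ?S)" by simp
    thus ?thesis by (simp add: continuous_within)
  qed
qed


definition "Ff s = Rt s - of_real aa / (s + of_real l)"

lemma Ff_split:
  assumes "s^2 + (of_real l)^2 \<noteq> 0" "Ach l t s \<noteq> 0" "s + of_real l \<noteq> 0"
  shows "Ff s = of_real (aa * l) * (s - of_real l) / ((s^2 + (of_real l)^2) * (s + of_real l))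
              - (s - of_real l * exp (- of_real t * s)) / (2 * (s^2 + (of_real l)^2) * Ach l t s)"
proof -
  have gen: "(a * s * A - (s - L * E) / 2) / (D * A) - a / (s + L)
      = a * L * (s - L) / (D * (s + L)) - (s - L * E) / (2 * D * A)"
    if "D = s^2 + L^2" "D \<noteq> 0" "A \<noteq> 0" "s + L \<noteq> 0" for a L A E D :: complex
  proof -
    have h1: "(a * s * A - (s - L * E) / 2) / (D * A) = a * s / D - (s - L * E) / (2 * D * A)"
      using that(2,3) by (simp add: field_simps)
    have h2: "a * s / D - a / (s + L) = a * (s * (s + L) - D) / (D * (s + L))"
      using that(2,4) by (simp add: field_simps)
    have h3: "s * (s + L) - D = L * (s - L)" using that(1) by (simp add: power2_eq_square algebra_simps)
    have h4: "a * s / D - a / (s + L) = a * L * (s - L) / (D * (s + L))"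
      unfolding h2 h3 by (simp add: mult.assoc)
    show ?thesis unfolding h1 h4[symmetric] by (simp add: diff_diff_eq add.commute diff_add_eq)
  qed
  have "s^2 + (of_real l)^2 \<noteq> 0 \<Longrightarrow> Rt s = Nf s / ((s^2 + (of_real l)^2) * Ach l t s)"
    by (simp add: Rt_def)
  thus ?thesis using assms gen[of "s^2 + (of_real l)^2" "of_real l" "Ach l t s" "of_real aa" "exp (- of_real t * s)"]
    unfolding Ff_def Nf_def by simp
qed

lemma Ff_bound:
  assumes r: "2 * l \<le> r" and sr: "cmod s = r" and Re: "0 \<le> Re s"
  shows "cmod (Ff s) \<le> (4 * \<bar>aa\<bar> * l + 2) / r^2"
proof -
  have l0: "0 < l" by (rule lpos)
  have rpos: "0 < r" using r l0 by linarith
  have E1: "cmod (exp (- of_real t * s)) \<le> 1" using tnn Re by (simp add: mult_nonneg_nonneg)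
  have n1: "cmod (s - of_real l) \<le> 3 * r / 2"
    using norm_triangle_ineq4[of s "of_real l"] sr r l0 by simp
  have "cmod (s^2) \<le> cmod (s^2 + (of_real l)^2) + l^2"
    using norm_triangle_ineq4[of "s^2 + (of_real l)^2" "(of_real l)^2"] by (simp add: norm_power)
  moreover have "l^2 \<le> (r/2)^2" using r l0 by (intro power_mono) auto
  ultimately have n2: "3 * r^2 / 4 \<le> cmod (s^2 + (of_real l)^2)"
    using sr by (simp add: norm_power power_divide)
  have n3: "r / 2 \<le> cmod (s + of_real l)"
    using norm_triangle_ineq2[of s "- of_real l"] sr r l0 by simp
  have n4: "cmod (s - of_real l * exp (- of_real t * s)) \<le> 3 * r / 2"
  proof -
    have "cmod (of_real l * exp (- of_real t * s)) \<le> l" using E1 l0 by (simp add: norm_mult mult_left_le)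
    thus ?thesis using norm_triangle_ineq4[of s "of_real l * exp (- of_real t * s)"] sr r by simp
  qed
  have n5: "r / 2 \<le> cmod (Ach l t s)"
  proof -
    have "cmod (of_real l * exp (- of_real t * s)) \<le> l" using E1 l0 by (simp add: norm_mult mult_left_le)
    thus ?thesis using norm_triangle_ineq2[of s "- (of_real l * exp (- of_real t * s))"] sr r
      by (simp add: Ach_def)
  qed
  have ne1: "s^2 + (of_real l)^2 \<noteq> 0" using n2 rpos by auto
  have ne2: "Ach l t s \<noteq> 0" using n5 rpos by auto
  have ne3: "s + of_real l \<noteq> 0" using n3 rpos by auto
  have t1: "cmod (of_real (aa * l) * (s - of_real l) / ((s^2 + (of_real l)^2) * (s + of_real l)))
            \<le> (\<bar>aa\<bar> * l * (3 * r / 2)) / ((3 * r^2 / 4) * (r / 2))"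
    unfolding norm_divide norm_mult norm_of_real
  proof (rule frac_le)
    show "0 \<le> \<bar>aa\<bar> * l * (3 * r / 2)" using l0 rpos by simp
    show "\<bar>aa * l\<bar> * cmod (s - of_real l) \<le> \<bar>aa\<bar> * l * (3 * r / 2)"
      using n1 l0 mult_left_mono[OF n1, of "\<bar>aa\<bar> * l"] by (simp add: abs_mult mult.assoc)
    show "0 < 3 * r\<^sup>2 / 4 * (r / 2)" using rpos by simp
    show "3 * r\<^sup>2 / 4 * (r / 2) \<le> cmod (s\<^sup>2 + (of_real l)\<^sup>2) * cmod (s + of_real l)"
      using n2 n3 rpos by (intro mult_mono) auto
  qed
  have t2: "cmod ((s - of_real l * exp (- of_real t * s)) / (2 * (s^2 + (of_real l)^2) * Ach l t s))
            \<le> (3 * r / 2) / (2 * (3 * r^2 / 4) * (r / 2))"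
    unfolding norm_divide norm_mult
  proof (rule frac_le)
    show "0 < 2 * (3 * r\<^sup>2 / 4) * (r / 2)" using rpos by simp
    show "2 * (3 * r\<^sup>2 / 4) * (r / 2) \<le> cmod 2 * cmod (s\<^sup>2 + (of_real l)\<^sup>2) * cmod (Ach l t s)"
      using n2 n5 rpos by (intro mult_mono) auto
  qed (use n4 rpos in auto)
  have "cmod (Ff s) \<le> (\<bar>aa\<bar> * l * (3 * r / 2)) / ((3 * r^2 / 4) * (r / 2)) + (3 * r / 2) / (2 * (3 * r^2 / 4) * (r / 2))"
    unfolding Ff_split[OF ne1 ne2 ne3]
    using norm_triangle_ineq4 t1 t2 by (smt (verit))
  also have "\<dots> = (4 * \<bar>aa\<bar> * l + 2) / r^2" using rpos by (simp add: field_simps power2_eq_square)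
  finally show ?thesis .
qed


lemma Ff_cont: "continuous_on {s. 0 \<le> Re s} Ff"
proof -
  have "continuous_on {s. 0 \<le> Re s} (\<lambda>s. Rt s - of_real aa / (s + of_real l))"
    by (intro continuous_intros Rt_cont; use lpos in \<open>auto simp: complex_eq_iff\<close>)
  thus ?thesis by (simp add: Ff_def[abs_def])
qed

lemma Ff_holo: "Ff holomorphic_on {s. 0 < Re s}"
proof -
  have "(\<lambda>s. Rt s - of_real aa / (s + of_real l)) holomorphic_on {s. 0 < Re s}"
  proof (intro holomorphic_intros Rt_holo)
    fix s :: complex assume "s \<in> {s. 0 < Re s}"
    hence "Re (s + of_real l) > 0" using lpos by simp
    thus "s + of_real l \<noteq> 0" by (auto simp: complex_eq_iff)
  qed
  thus ?thesis by (simp add: Ff_def[abs_def])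
qed

lemma contour_line:
  assumes r: "2 * l \<le> r"
  shows "\<exists>I. ((\<lambda>x. Re (Ff (Complex 0 x))) has_integral I) {-r..r} \<and>
             \<bar>I\<bar> \<le> (4 * \<bar>aa\<bar> * l + 2) * pi / r"
proof -
  have rpos: "0 < r" using r lpos by linarith
  define S where "S = {s. 0 \<le> Re s} \<inter> cball 0 r"
  define g1 where "g1 = linepath (- \<i> * of_real r) (\<i> * of_real r)"
  define g2 where "g2 = part_circlepath 0 r (-pi/2) (pi/2)"
  have cS: "convex S" unfolding S_def
    by (intro convex_Int convex_cball) (use convex_halfspace_Re_ge[of 0] in auto)
  have contS: "continuous_on S Ff" unfolding S_def by (rule continuous_on_subset[OF Ff_cont]) auto
  have diffS: "Ff field_differentiable at x" if x: "x \<in> interior S" for x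
  proof -
    obtain e where e: "e > 0" "ball x e \<subseteq> S" using x mem_interior by blast
    have "Re x > 0"
    proof (rule ccontr)
      assume "\<not> Re x > 0"
      have "x - of_real (e/2) \<in> ball x e" using e by (simp add: dist_norm)
      hence "x - of_real (e/2) \<in> S" using e by blast
      hence "0 \<le> Re x - e/2" by (simp add: S_def)
      thus False using \<open>\<not> Re x > 0\<close> e by simp
    qed
    thus ?thesis using Ff_holo holomorphic_on_imp_differentiable_at[of Ff "{s. 0 < Re s}" x]
      open_halfspace_Re_gt[of 0] by auto
  qed
  have img2: "path_image g2 \<subseteq> S"
  proof
    fix z assume "z \<in> path_image g2"
    then obtain x where x: "x \<in> closed_segment (-pi/2) (pi/2)" "z = of_real r * cis x"
      unfolding g2_def path_image_part_circlepath' by auto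
    have "x \<in> {-pi/2..pi/2}" using x(1) closed_segment_eq_real_ivl by auto
    hence "cos x \<ge> 0" by (intro cos_ge_zero) auto
    thus "z \<in> S" using x rpos by (simp add: S_def norm_mult)
  qed
  have p1: "- \<i> * of_real r \<in> S" "\<i> * of_real r \<in> S" using rpos by (auto simp: S_def norm_mult)
  have img1: "path_image g1 \<subseteq> S" unfolding g1_def
    using closed_segment_subset[OF p1 cS] by simp
  have st2: "pathstart g2 = - \<i> * of_real r" "pathfinish g2 = \<i> * of_real r"
    by (simp_all add: g2_def complex_eq_iff Re_exp Im_exp)
  have st1: "pathstart g1 = - \<i> * of_real r" "pathfinish g1 = \<i> * of_real r"
    by (simp_all add: g1_def)
  have int1: "Ff contour_integrable_on g1" unfolding g1_def
    by (rule contour_integrable_continuous_linepath, rule continuous_on_subset[OF contS])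
       (use img1 in \<open>simp add: g1_def\<close>)
  have int2: "Ff contour_integrable_on g2" unfolding g2_def
    by (rule contour_integrable_continuous_part_circlepath, rule continuous_on_subset[OF contS])
       (use img2 in \<open>simp add: g2_def\<close>)
  obtain I1 where I1: "(Ff has_contour_integral I1) g1" using int1 contour_integrable_on_def by blast
  obtain I2 where I2: "(Ff has_contour_integral I2) g2" using int2 contour_integrable_on_def by blast
  have v1: "valid_path g1" "valid_path g2" by (simp_all add: g1_def g2_def)
  have I2r: "(Ff has_contour_integral (-I2)) (reversepath g2)"
    by (rule has_contour_integral_reversepath[OF v1(2) I2])
  have j: "(Ff has_contour_integral (I1 + - I2)) (g1 +++ reversepath g2)"
    by (rule has_contour_integral_join[OF I1 I2r]) (use v1 st1 st2 in auto)
  have z: "(Ff has_contour_integral 0) (g1 +++ reversepath g2)"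
    by (rule Cauchy_theorem_convex[OF contS cS finite.emptyI])
       (use diffS v1 img1 img2 st1 st2 in \<open>auto simp: path_image_join\<close>)
  have I12: "I1 = I2" using has_contour_integral_unique[OF j z] by simp
  have bnd: "cmod I2 \<le> (4 * \<bar>aa\<bar> * l + 2) / r^2 * r * (pi/2 - -pi/2)"
  proof (rule has_contour_integral_bound_part_circlepath[OF I2[unfolded g2_def]])
    show "0 \<le> (4 * \<bar>aa\<bar> * l + 2) / r\<^sup>2" using lpos by simp
    show "0 < r" by fact
    show "-pi/2 \<le> pi/2" by simp
    fix x assume "x \<in> path_image (part_circlepath 0 r (- pi / 2) (pi / 2))"
    hence "x \<in> S" "cmod x = r" using img2 path_image_part_circlepath_subset'[of r 0 "-pi/2" "pi/2"] rpos
      by (auto simp: g2_def sphere_def dist_norm)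
    thus "cmod (Ff x) \<le> (4 * \<bar>aa\<bar> * l + 2) / r\<^sup>2"
      using Ff_bound[OF r] by (simp add: S_def)
  qed
  have "(Ff has_contour_integral I1) (linepath (- \<i> * of_real r) (\<i> * of_real r))" using I1 by (simp add: g1_def)
  hence hi: "((\<lambda>x. Ff (Complex 0 x)) has_integral (-\<i> * I1)) {-r..r}"
    using has_contour_integral_linepath_same_Re_iff[of "- \<i> * of_real r" 0 "\<i> * of_real r" "-r" r Ff I1] rpos
    by simp
  have "((\<lambda>x. Re (Ff (Complex 0 x))) has_integral Re (-\<i> * I1)) {-r..r}"
    using has_integral_linear[OF hi bounded_linear_Re] by (simp add: o_def)
  moreover have "\<bar>Re (-\<i> * I1)\<bar> \<le> (4 * \<bar>aa\<bar> * l + 2) * pi / r"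
  proof -
    have "\<bar>Re (-\<i> * I1)\<bar> \<le> cmod I1" using abs_Re_le_cmod[of "-\<i> * I1"] by (simp add: norm_mult)
    also have "\<dots> \<le> (4 * \<bar>aa\<bar> * l + 2) / r^2 * r * (pi/2 - -pi/2)" using bnd I12 by simp
    also have "\<dots> = (4 * \<bar>aa\<bar> * l + 2) * pi / r" using rpos by (simp add: field_simps power2_eq_square)
    finally show ?thesis .
  qed
  ultimately show ?thesis by blast
qed


definition "phi x = 1 / (cmod (Ach l t (\<i> * of_real x)))^2"

lemma phi_split:
  assumes "x^2 \<noteq> l^2"
  shows "phi x = 2 * Re (Ff (Complex 0 x)) + 2 * aa * (l / (x^2 + l^2))"
proof -
  have e: "Complex 0 x = \<i> * of_real x" by (simp add: complex_eq_iff)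
  have "Re (of_real aa / (\<i> * of_real x + of_real l)) = aa * (l / (x^2 + l^2))"
    by (simp add: Re_divide power2_eq_square)
  thus ?thesis using Rt_axis[OF assms] unfolding phi_def Ff_def e by simp
qed

lemma phi_cont: "continuous_on UNIV phi"
proof -
  have "continuous_on UNIV (\<lambda>x::real. 1 / (cmod (\<i> * of_real x + of_real l * exp (- of_real t * (\<i> * of_real x))))^2)"
    by (intro continuous_intros; use Ach_nonzero[OF lpos tnn ltb] in \<open>auto simp: Ach_def\<close>)
  thus ?thesis by (simp add: phi_def[abs_def] Ach_def)
qed

lemma phi_nonneg: "phi x \<ge> 0" by (simp add: phi_def)

lemma arctan_int:
  assumes "0 \<le> r"
  shows "((\<lambda>x. l / (x^2 + l^2)) has_integral (2 * arctan (r / l))) {-r..r}"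
proof -
  have "((\<lambda>x. l / (x^2 + l^2)) has_integral (arctan (r / l) - arctan (-r / l))) {-r..r}"
  proof (rule fundamental_theorem_of_calculus)
    show "-r \<le> r" using assms by simp
    fix x assume "x \<in> {-r..r}"
    have "((\<lambda>x. arctan (x / l)) has_real_derivative (inverse (1 + (x / l)^2) * (1 / l))) (at x)"
      using lpos by (intro DERIV_chain2[OF DERIV_arctan]) (auto intro!: derivative_eq_intros)
    moreover have "inverse (1 + (x / l)^2) * (1 / l) = l / (x^2 + l^2)"
      using lpos by (simp add: field_simps power2_eq_square)
    ultimately show "((\<lambda>x. arctan (x / l)) has_vector_derivative l / (x^2 + l^2)) (at x within {-r..r})"
      using has_real_derivative_iff_has_vector_derivative has_vector_derivative_at_within by metis
  qed
  thus ?thesis by (simp add: arctan_minus)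
qed

lemma phi_interval:
  assumes r: "2 * l \<le> r"
  shows "\<exists>I. (phi has_integral (2 * I + 4 * aa * arctan (r / l))) {-r..r} \<and>
             \<bar>I\<bar> \<le> (4 * \<bar>aa\<bar> * l + 2) * pi / r"
proof -
  obtain I where I: "((\<lambda>x. Re (Ff (Complex 0 x))) has_integral I) {-r..r}"
      "\<bar>I\<bar> \<le> (4 * \<bar>aa\<bar> * l + 2) * pi / r"
    using contour_line[OF r] by blast
  have r0: "0 \<le> r" using r lpos by simp
  have "((\<lambda>x. 2 * Re (Ff (Complex 0 x)) + 2 * aa * (l / (x^2 + l^2))) has_integral
          (2 * I + 2 * aa * (2 * arctan (r / l)))) {-r..r}"
    by (intro has_integral_add has_integral_mult_right I(1) arctan_int r0)
  hence "(phi has_integral (2 * I + 2 * aa * (2 * arctan (r / l)))) {-r..r}"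
  proof (rule has_integral_spike_finite[of "{l, -l}", rotated 2])
    fix x assume "x \<in> {-r..r} - {l, -l}"
    hence "x^2 \<noteq> l^2" by (auto simp: power2_eq_iff)
    thus "phi x = 2 * Re (Ff (Complex 0 x)) + 2 * aa * (l / (x^2 + l^2))" by (rule phi_split)
  qed simp
  thus ?thesis using I(2) by (intro exI[of _ I]) (simp add: mult.assoc)
qed

theorem phi_integral: "(phi has_integral (2 * pi * aa)) UNIV"
proof -
  define f where "f k x = (if x \<in> {-real k..real k} then phi x else 0)" for k :: nat and x :: real
  have intf: "(phi has_integral integral {-real k..real k} phi) {-real k..real k}" for k
    using integrable_continuous_interval[OF continuous_on_subset[OF phi_cont]] by blast
  have intf': "(f k has_integral integral {-real k..real k} phi) UNIV" for k
    unfolding f_def using intf[of k] has_integral_restrict_UNIV[of "{-real k..real k}" phi] by simp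
  define C where "C = (4 * \<bar>aa\<bar> * l + 2) * pi"
  have lim: "(\<lambda>k. integral {-real k..real k} phi) \<longlonglongrightarrow> 2 * pi * aa"
  proof -
    have ev: "eventually (\<lambda>k. 2 * l \<le> real k) sequentially"
      using filterlim_real_sequentially unfolding filterlim_at_top by blast
    define J where "J k = (SOME I. (phi has_integral (2 * I + 4 * aa * arctan (real k / l))) {-real k..real k} \<and>
             \<bar>I\<bar> \<le> C / real k)" for k :: nat
    have Jk: "(phi has_integral (2 * J k + 4 * aa * arctan (real k / l))) {-real k..real k} \<and>
             \<bar>J k\<bar> \<le> C / real k" if "2 * l \<le> real k" for k
      unfolding J_def C_def by (rule someI_ex) (use phi_interval[OF that] in auto)
    have e1: "eventually (\<lambda>k. 2 * J k + 4 * aa * arctan (real k / l) = integral {-real k..real k} phi) sequentially"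
      using ev
    proof eventually_elim
      case (elim k)
      from Jk[OF elim] show ?case by (metis integral_unique)
    qed
    have "J \<longlonglongrightarrow> 0"
    proof (rule Lim_null_comparison)
      show "eventually (\<lambda>k. norm (J k) \<le> C / real k) sequentially"
        using ev by eventually_elim (use Jk in auto)
      show "(\<lambda>k. C / real k) \<longlonglongrightarrow> 0" by (rule lim_const_over_n)
    qed
    moreover have "(\<lambda>k. arctan (real k / l)) \<longlonglongrightarrow> pi / 2"
    proof -
      have "filterlim (\<lambda>k. (1 / l) * real k) at_top sequentially"
        using lpos by (intro filterlim_tendsto_pos_mult_at_top[OF tendsto_const] filterlim_real_sequentially) auto
      hence "filterlim (\<lambda>k. real k / l) at_top sequentially" by simp
      thus ?thesis by (rule filterlim_compose[OF tendsto_arctan_at_top])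
    qed
    ultimately have "(\<lambda>k. 2 * J k + 4 * aa * arctan (real k / l)) \<longlonglongrightarrow> 2 * 0 + 4 * aa * (pi / 2)"
      by (intro tendsto_intros)
    hence "(\<lambda>k. 2 * J k + 4 * aa * arctan (real k / l)) \<longlonglongrightarrow> 2 * pi * aa" by (simp add: mult.assoc)
    thus ?thesis by (rule Lim_transform_eventually[OF _ e1])
  qed
  have mc: "phi integrable_on UNIV \<and> (\<lambda>k. integral UNIV (f k)) \<longlonglongrightarrow> integral UNIV phi"
  proof (rule monotone_convergence_increasing)
    show "f k integrable_on UNIV" for k using intf' by blast
    show "f k x \<le> f (Suc k) x" for k x using phi_nonneg[of x] by (auto simp: f_def)
    show "(\<lambda>k. f k x) \<longlonglongrightarrow> phi x" for x
    proof -
      have "eventually (\<lambda>k. \<bar>x\<bar> \<le> real k) sequentially"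
        using filterlim_real_sequentially unfolding filterlim_at_top by blast
      hence "eventually (\<lambda>k. phi x = f k x) sequentially"
        by eventually_elim (auto simp: f_def)
      thus ?thesis by (rule Lim_transform_eventually[OF tendsto_const])
    qed
    have "integral UNIV (f k) = integral {-real k..real k} phi" for k using intf' integral_unique by blast
    hence "range (\<lambda>k. integral UNIV (f k)) = range (\<lambda>k. integral {-real k..real k} phi)" by simp
    thus "bounded (range (\<lambda>k. integral UNIV (f k)))"
      using convergent_imp_Bseq[of "\<lambda>k. integral {-real k..real k} phi"] lim Bseq_eq_bounded
      by (metis convergent_def)
  qed
  have "(\<lambda>k. integral UNIV (f k)) = (\<lambda>k. integral {-real k..real k} phi)"
    using intf' integral_unique by blast
  hence "integral UNIV phi = 2 * pi * aa" using mc lim LIMSEQ_unique by metis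
  thus ?thesis using mc by (metis has_integral_integral)
qed

end

lemma scalar_integral:
  fixes l t :: real
  assumes "l > 0" "t \<ge> 0" "l * t < pi/2"
  shows "((\<lambda>x. 1 / (cmod (Ach l t (\<i> * of_real x)))^2) has_integral
           (pi * cos (l * t) / (l * (1 - sin (l * t))))) UNIV"
proof -
  interpret scal l t using assms by unfold_locales
  have "2 * pi * aa = pi * cos (l * t) / (l * (1 - sin (l * t)))"
    using sin_th_lt lpos by (simp add: aa_def th_def field_simps)
  thus ?thesis using phi_integral unfolding phi_def[abs_def] by simp
qed



lemma sym_inner:
  fixes A :: "real^'n^'n"
  assumes "transpose A = A"
  shows "x \<bullet> (A *v y) = (A *v x) \<bullet> y"
proof -
  have "x \<bullet> (A *v y) = (x v* A) \<bullet> y" by (simp add: dot_lmul_matrix)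
  also have "x v* A = transpose A *v x" by simp
  finally show ?thesis using assms by simp
qed

lemma eigen_exists:
  fixes A :: "real^'n^'n"
  assumes sym: "transpose A = A" and S: "subspace S" and inv: "\<And>x. x \<in> S \<Longrightarrow> A *v x \<in> S"
    and ne: "\<exists>x\<in>S. x \<noteq> 0"
  shows "\<exists>v\<in>S. v \<bullet> v = 1 \<and> A *v v = (v \<bullet> (A *v v)) *\<^sub>R v"
proof -
  define K where "K = S \<inter> sphere 0 1"
  have cK: "compact K" unfolding K_def
    by (intro closed_Int_compact closed_subspace S compact_sphere)
  obtain x where x: "x \<in> S" "x \<noteq> 0" using ne by blast
  have "(1 / norm x) *\<^sub>R x \<in> K" using x S by (auto simp: K_def subspace_scale)
  hence neK: "K \<noteq> {}" by blast
  have contf: "continuous_on K (\<lambda>x. x \<bullet> (A *v x))"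
    by (intro continuous_intros)
  obtain v where v: "v \<in> K" "\<And>y. y \<in> K \<Longrightarrow> y \<bullet> (A *v y) \<le> v \<bullet> (A *v v)"
    using continuous_attains_sup[OF cK neK contf] by blast
  define mu where "mu = v \<bullet> (A *v v)"
  have vS: "v \<in> S" and vv: "v \<bullet> v = 1" using v(1) by (auto simp: K_def norm_eq_1)
  have ray: "w \<bullet> (A *v w) \<le> mu * (w \<bullet> w)" if w: "w \<in> S" for w
  proof (cases "w = 0")
    case True thus ?thesis by simp
  next
    case False
    define u where "u = (1 / norm w) *\<^sub>R w"
    have "u \<in> K" using w False S by (auto simp: K_def u_def subspace_scale)
    hence "u \<bullet> (A *v u) \<le> mu" using v(2) mu_def by blast
    moreover have "u \<bullet> (A *v u) = (w \<bullet> (A *v w)) / (norm w)^2"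
      by (simp add: u_def matrix_vector_mult_scaleR power2_eq_square)
    ultimately have "(w \<bullet> (A *v w)) / (norm w)^2 \<le> mu" by simp
    moreover have "(norm w)^2 > 0" using False by simp
    ultimately show ?thesis by (simp add: divide_le_eq power2_norm_eq_inner)
  qed
  have d0: "u \<bullet> (A *v v) - mu * (u \<bullet> v) = 0" if u: "u \<in> S" for u
  proof -
    define d where "d = u \<bullet> (A *v v) - mu * (u \<bullet> v)"
    define q where "q = u \<bullet> (A *v u) - mu * (u \<bullet> u)"
    have quad: "2 * e * d + e^2 * q \<le> 0" for e :: real
    proof -
      have "v + e *\<^sub>R u \<in> S" using vS u S by (simp add: subspace_add subspace_scale)
      from ray[OF this]
      have "(v + e *\<^sub>R u) \<bullet> (A *v (v + e *\<^sub>R u)) \<le> mu * ((v + e *\<^sub>R u) \<bullet> (v + e *\<^sub>R u))" .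
      moreover have "v \<bullet> (A *v u) = u \<bullet> (A *v v)"
        using sym_inner[OF sym, of v u] by (simp add: inner_commute)
      ultimately show ?thesis
        by (simp add: d_def q_def mu_def[symmetric] matrix_vector_right_distrib matrix_vector_mult_scaleR
              inner_add_left inner_add_right vv inner_commute[of v u] algebra_simps power2_eq_square)
    qed
    define p where "p = \<bar>q\<bar> + 1"
    define e where "e = d / p"
    have qp: "p > 0" by (simp add: p_def)
    have "2 * e * d + e^2 * q \<le> 0" by (rule quad)
    moreover have "2 * e * d + e^2 * q = (2 * d * d * p + d * d * q) / p^2"
      using qp by (simp add: e_def field_simps power2_eq_square)
    ultimately have "(2 * d * d * p + d * d * q) / p^2 \<le> 0" by simp
    hence "2 * d * d * p + d * d * q \<le> 0"
      using qp by (simp add: divide_le_0_iff)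
    hence "(d * d) * (2 * \<bar>q\<bar> + 2 + q) \<le> 0" by (simp add: algebra_simps p_def)
    moreover have "2 * \<bar>q\<bar> + 2 + q > 0" by linarith
    ultimately have "d * d \<le> 0" by (simp add: mult_le_0_iff)
    hence "d = 0" by (simp add: mult_le_0_iff) (metis mult_eq_0_iff order_antisym_conv zero_le_square)
    thus ?thesis by (simp add: d_def)
  qed
  define u where "u = A *v v - mu *\<^sub>R v"
  have uS: "u \<in> S" unfolding u_def using inv[OF vS] vS S by (simp add: subspace_diff subspace_scale)
  have "u \<bullet> u = u \<bullet> (A *v v) - mu * (u \<bullet> v)" by (simp add: u_def inner_diff_right)
  hence "u \<bullet> u = 0" using d0[OF uS] by simp
  hence "u = 0" by simp
  hence "A *v v = mu *\<^sub>R v" by (simp add: u_def)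
  thus ?thesis using vS vv mu_def by blast
qed


lemma spectral_sub:
  fixes A :: "real^'n^'n"
  assumes sym: "transpose A = A"
  shows "subspace S \<Longrightarrow> (\<And>x. x \<in> S \<Longrightarrow> A *v x \<in> S) \<Longrightarrow>
    \<exists>B. B \<subseteq> S \<and> finite B \<and> (\<forall>b\<in>B. b \<bullet> b = 1) \<and> (\<forall>b\<in>B. \<forall>b'\<in>B. b \<noteq> b' \<longrightarrow> b \<bullet> b' = 0) \<and>
        (\<forall>b\<in>B. A *v b = (b \<bullet> (A *v b)) *\<^sub>R b) \<and> (\<forall>x\<in>S. x = (\<Sum>b\<in>B. (b \<bullet> x) *\<^sub>R b))"
proof (induction "dim S" arbitrary: S rule: less_induct)
  case less
  show ?case
  proof (cases "\<exists>x\<in>S. x \<noteq> 0")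
    case False
    hence "\<forall>x\<in>S. x = 0" by blast
    thus ?thesis by (intro exI[of _ "{}"]) auto
  next
    case True
    obtain v where v: "v \<in> S" "v \<bullet> v = 1" "A *v v = (v \<bullet> (A *v v)) *\<^sub>R v"
      using eigen_exists[OF sym less.prems(1) less.prems(2) True] by blast
    define mu where "mu = v \<bullet> (A *v v)"
    define S' where "S' = S \<inter> {x. v \<bullet> x = 0}"
    have sub': "subspace S'" unfolding S'_def by (intro subspace_inter less.prems(1) subspace_hyperplane)
    have inv': "A *v x \<in> S'" if "x \<in> S'" for x
    proof -
      have "v \<bullet> (A *v x) = (A *v v) \<bullet> x" by (rule sym_inner[OF sym])
      also have "\<dots> = mu * (v \<bullet> x)" using v(3) by (simp add: mu_def[symmetric])
      finally show ?thesis using that less.prems(2) by (simp add: S'_def)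
    qed
    have "v \<notin> S'" using v(2) by (simp add: S'_def)
    hence "S' \<subset> S" using v(1) unfolding S'_def by blast
    moreover have e1: "span S' = S'" by (rule span_eq_iff[THEN iffD2, OF sub'])
    moreover have e2: "span S = S" by (rule span_eq_iff[THEN iffD2, OF less.prems(1)])
    ultimately have "dim S' < dim S" using dim_psubset[of S' S] by argo
    then obtain B' where B': "B' \<subseteq> S'" "finite B'" "\<forall>b\<in>B'. b \<bullet> b = 1"
        "\<forall>b\<in>B'. \<forall>b'\<in>B'. b \<noteq> b' \<longrightarrow> b \<bullet> b' = 0" "\<forall>b\<in>B'. A *v b = (b \<bullet> (A *v b)) *\<^sub>R b"
        "\<forall>x\<in>S'. x = (\<Sum>b\<in>B'. (b \<bullet> x) *\<^sub>R b)"
      using less.hyps[OF _ sub' inv'] by blast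
    have vB: "v \<notin> B'" using B'(1) v(2) by (auto simp: S'_def)
    have orthv: "b \<bullet> v = 0" if "b \<in> B'" for b using B'(1) that by (auto simp: S'_def inner_commute)
    show ?thesis
    proof (intro exI[of _ "insert v B'"] conjI ballI impI)
      show "insert v B' \<subseteq> S" using B'(1) v(1) by (auto simp: S'_def)
      show "finite (insert v B')" using B'(2) by simp
      show "b \<bullet> b = 1" if "b \<in> insert v B'" for b using that B'(3) v(2) by auto
      show "b \<bullet> b' = 0" if "b \<in> insert v B'" "b' \<in> insert v B'" "b \<noteq> b'" for b b'
        using that B'(4) orthv by (auto simp: inner_commute)
      show "A *v b = (b \<bullet> (A *v b)) *\<^sub>R b" if "b \<in> insert v B'" for b using that B'(5) v(3) by auto
      fix x assume x: "x \<in> S"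
      define y where "y = x - (v \<bullet> x) *\<^sub>R v"
      have yS: "y \<in> S'" using x v less.prems(1)
        by (auto simp: S'_def y_def subspace_diff subspace_scale inner_diff_right)
      have "y = (\<Sum>b\<in>B'. (b \<bullet> y) *\<^sub>R b)" using B'(6) yS by blast
      also have "\<dots> = (\<Sum>b\<in>B'. (b \<bullet> x) *\<^sub>R b)"
        by (intro sum.cong refl) (simp add: y_def inner_diff_right orthv)
      finally have "x = (v \<bullet> x) *\<^sub>R v + (\<Sum>b\<in>B'. (b \<bullet> x) *\<^sub>R b)" by (simp add: y_def algebra_simps)
      thus "x = (\<Sum>b\<in>insert v B'. (b \<bullet> x) *\<^sub>R b)" using B'(2) vB by simp
    qed
  qed
qed

lemma spectral:
  fixes A :: "real^'n^'n"
  assumes sym: "transpose A = A"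
  shows "\<exists>B. finite B \<and> (\<forall>b\<in>B. b \<bullet> b = 1) \<and> (\<forall>b\<in>B. \<forall>b'\<in>B. b \<noteq> b' \<longrightarrow> b \<bullet> b' = 0) \<and>
        (\<forall>b\<in>B. A *v b = (b \<bullet> (A *v b)) *\<^sub>R b) \<and> (\<forall>x. x = (\<Sum>b\<in>B. (b \<bullet> x) *\<^sub>R b))"
  using spectral_sub[OF sym subspace_UNIV] by auto



locale onb =
  fixes B :: "(real^'n::finite) set"
  assumes finB: "finite B"
    and nrm: "\<And>b. b \<in> B \<Longrightarrow> b \<bullet> b = 1"
    and orth: "\<And>b b'. b \<in> B \<Longrightarrow> b' \<in> B \<Longrightarrow> b \<noteq> b' \<Longrightarrow> b \<bullet> b' = 0"
    and expand: "\<And>x. x = (\<Sum>b\<in>B. (b \<bullet> x) *\<^sub>R b)"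
begin

lemma K1: "(\<Sum>b\<in>B. b$i * b$j) = (if i = j then 1 else 0)"
proof -
  have "axis j (1::real) $ i = (\<Sum>b\<in>B. (b \<bullet> axis j 1) *\<^sub>R b) $ i" using expand by metis
  moreover have "b \<bullet> axis j 1 = b $ j" for b :: "real^'n" by (simp add: inner_axis)
  moreover have "axis j (1::real) $ i = (if i = j then 1 else 0)" by (simp add: axis_def)
  ultimately show ?thesis by (simp add: mult.commute)
qed

lemma K2: "b \<in> B \<Longrightarrow> b' \<in> B \<Longrightarrow> (\<Sum>i\<in>UNIV. b$i * b'$i) = (if b = b' then 1 else 0)"
  using nrm orth by (auto simp: inner_vec_def)

definition GSm :: "(real^'n \<Rightarrow> 'a::real_field) \<Rightarrow> 'a^'n^'n" where
  "GSm f = (\<chi> i j. \<Sum>b\<in>B. f b * of_real (b$i * b$j))"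

lemma GSm_nth: "GSm f $ i $ j = (\<Sum>b\<in>B. f b * of_real (b$i * b$j))"
  by (simp add: GSm_def)

lemma GSm_mult: "GSm f ** GSm g = GSm (\<lambda>b. f b * g b)"
proof -
  have "(\<Sum>k\<in>UNIV. (\<Sum>b\<in>B. f b * of_real (b$i * b$k)) * (\<Sum>b'\<in>B. g b' * of_real (b'$k * b'$j)))
      = (\<Sum>b\<in>B. f b * g b * of_real (b$i * b$j))" for i j
  proof -
    have "(\<Sum>k\<in>UNIV. (\<Sum>b\<in>B. f b * of_real (b$i * b$k)) * (\<Sum>b'\<in>B. g b' * of_real (b'$k * b'$j)))
        = (\<Sum>k\<in>UNIV. \<Sum>b\<in>B. \<Sum>b'\<in>B. f b * g b' * of_real (b$i * b'$j) * of_real (b$k * b'$k))"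
      unfolding sum_product by (intro sum.cong refl) (simp add: algebra_simps)
    also have "\<dots> = (\<Sum>b\<in>B. \<Sum>b'\<in>B. f b * g b' * of_real (b$i * b'$j) * of_real (\<Sum>k\<in>UNIV. b$k * b'$k))"
      by (simp add: sum.swap[of _ UNIV] sum_distrib_left)
    also have "\<dots> = (\<Sum>b\<in>B. \<Sum>b'\<in>B. if b = b' then f b * g b' * of_real (b$i * b'$j) else 0)"
      by (intro sum.cong refl) (simp add: K2)
    also have "\<dots> = (\<Sum>b\<in>B. f b * g b * of_real (b$i * b$j))"
      using finB by (simp add: sum.delta)
    finally show ?thesis .
  qed
  thus ?thesis by (simp add: GSm_def matrix_matrix_mult_def vec_eq_iff)
qed

lemma GSm_const: "GSm (\<lambda>b. c) = mat c"
proof -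
  have "(\<Sum>b\<in>B. c * of_real (b$i * b$j)) = (if i = j then c else 0)" for i j
  proof -
    have "(\<Sum>b\<in>B. c * of_real (b$i * b$j)) = c * of_real (\<Sum>b\<in>B. b$i * b$j)"
      by (simp only: of_real_sum sum_distrib_left)
    thus ?thesis using K1[of i j] by simp
  qed
  thus ?thesis by (simp add: GSm_def mat_def vec_eq_iff)
qed

lemma GSm_one: "GSm (\<lambda>b. 1) = mat 1" by (rule GSm_const)

lemma GSm_add: "GSm f + GSm g = GSm (\<lambda>b. f b + g b)"
  by (simp add: GSm_def vec_eq_iff sum.distrib algebra_simps)

lemma GSm_diff: "GSm f - GSm g = GSm (\<lambda>b. f b - g b)"
  by (simp add: GSm_def vec_eq_iff sum_subtractf algebra_simps)

lemma GSm_transpose: "transpose (GSm f) = GSm f"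
  by (simp add: GSm_def transpose_def vec_eq_iff mult.commute)

lemma mat_GSm: "mat c ** GSm f = GSm (\<lambda>b. c * f b)"
  by (simp add: GSm_const[symmetric] GSm_mult)

lemma GSm_scaleR: "r *\<^sub>R GSm f = GSm (\<lambda>b. r *\<^sub>R f b)"
  by (simp add: GSm_def vec_eq_iff scaleR_sum_right)

lemma GSm_cong: "(\<And>b. b \<in> B \<Longrightarrow> f b = g b) \<Longrightarrow> GSm f = GSm g"
  by (simp add: GSm_def)

lemma GSm_inv:
  assumes "\<And>b. b \<in> B \<Longrightarrow> f b \<noteq> 0"
  shows "matrix_inv (GSm f) = GSm (\<lambda>b. inverse (f b))"
proof -
  have 1: "GSm f ** GSm (\<lambda>b. inverse (f b)) = mat 1"
    unfolding GSm_mult GSm_one[symmetric] by (rule GSm_cong) (simp add: assms)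
  have 2: "GSm (\<lambda>b. inverse (f b)) ** GSm f = mat 1"
    unfolding GSm_mult GSm_one[symmetric] by (rule GSm_cong) (simp add: assms)
  define Y where "Y = matrix_inv (GSm f)"
  have "GSm f ** Y = mat 1 \<and> Y ** GSm f = mat 1"
    unfolding Y_def matrix_inv_def by (rule someI[of _ "GSm (\<lambda>b. inverse (f b))"]) (simp add: 1 2)
  hence "Y = Y ** (GSm f ** GSm (\<lambda>b. inverse (f b)))" by (simp add: 1)
  also have "\<dots> = GSm (\<lambda>b. inverse (f b))"
    by (metis matrix_mul_assoc matrix_mul_lid \<open>GSm f ** Y = mat 1 \<and> Y ** GSm f = mat 1\<close>)
  finally show ?thesis by (simp add: Y_def)
qed

lemma GSm_real_vec: "b0 \<in> B \<Longrightarrow> (GSm f :: real^'n^'n) *v b0 = f b0 *\<^sub>R b0"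
proof -
  assume b0: "b0 \<in> B"
  have "(\<Sum>j\<in>UNIV. (\<Sum>b\<in>B. f b * (b$i * b$j)) * b0$j) = f b0 * b0$i" for i
  proof -
    have "(\<Sum>j\<in>UNIV. (\<Sum>b\<in>B. f b * (b$i * b$j)) * b0$j) = (\<Sum>b\<in>B. f b * b$i * (\<Sum>j\<in>UNIV. b$j * b0$j))"
      by (simp add: sum_distrib_right sum_distrib_left sum.swap[of _ UNIV] algebra_simps)
    also have "\<dots> = (\<Sum>b\<in>B. if b = b0 then f b * b$i else 0)"
      by (intro sum.cong refl) (simp add: K2 b0)
    also have "\<dots> = f b0 * b0$i" using finB b0 by (simp add: sum.delta')
    finally show ?thesis .
  qed
  thus ?thesis by (simp add: GSm_def matrix_vector_mult_def vec_eq_iff)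
qed

lemma real_mat_eq_basis:
  fixes M N :: "real^'n^'n"
  assumes "\<And>b. b \<in> B \<Longrightarrow> M *v b = N *v b"
  shows "M = N"
proof -
  have "M *v x = N *v x" for x
  proof -
    have "M *v x = M *v (\<Sum>b\<in>B. (b \<bullet> x) *\<^sub>R b)" using expand by metis
    also have "\<dots> = (\<Sum>b\<in>B. (b \<bullet> x) *\<^sub>R (M *v b))"
      by (simp add: linear_sum[OF matrix_vector_mul_linear] matrix_vector_mult_scaleR o_def)
    also have "\<dots> = (\<Sum>b\<in>B. (b \<bullet> x) *\<^sub>R (N *v b))" using assms by simp
    also have "\<dots> = N *v (\<Sum>b\<in>B. (b \<bullet> x) *\<^sub>R b)"
      by (simp add: linear_sum[OF matrix_vector_mul_linear] matrix_vector_mult_scaleR o_def)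
    finally show ?thesis using expand by metis
  qed
  thus ?thesis by (simp add: matrix_eq)
qed

lemma real_GSm_eqI:
  fixes M :: "real^'n^'n"
  assumes "\<And>b. b \<in> B \<Longrightarrow> M *v b = f b *\<^sub>R b"
  shows "M = GSm f"
  by (rule real_mat_eq_basis) (simp add: assms GSm_real_vec)

end



definition Ecol :: "('e::finite \<Rightarrow> 'n::finite) \<Rightarrow> ('e \<Rightarrow> 'n) \<Rightarrow> 'e \<Rightarrow> real^'n" where
  "Ecol src dst f = (\<chi> i. incidence src dst $ i $ f)"

lemma lap_nth: "laplacian src dst w $ i $ j = (\<Sum>f\<in>UNIV. incidence src dst $ i $ f * w f * incidence src dst $ j $ f)"
proof -
  have "(incidence src dst ** diag_mat w) $ i $ f = incidence src dst $ i $ f * w f" for f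
  proof -
    have "(incidence src dst ** diag_mat w) $ i $ f = (\<Sum>k\<in>UNIV. incidence src dst $ i $ k * (if k = f then w k else 0))"
      by (simp add: matrix_matrix_mult_def diag_mat_def)
    also have "\<dots> = (\<Sum>k\<in>UNIV. if k = f then incidence src dst $ i $ k * w k else 0)"
      by (intro sum.cong refl) simp
    finally show ?thesis by simp
  qed
  thus ?thesis by (simp add: laplacian_def matrix_matrix_mult_def transpose_def)
qed

lemma lap_vec: "laplacian src dst w *v x = (\<Sum>f\<in>UNIV. (w f * (Ecol src dst f \<bullet> x)) *\<^sub>R Ecol src dst f)"
proof -
  have "(\<Sum>j\<in>UNIV. (\<Sum>f\<in>UNIV. incidence src dst $ i $ f * w f * incidence src dst $ j $ f) * x$j)
      = (\<Sum>f\<in>UNIV. w f * (\<Sum>j\<in>UNIV. incidence src dst $ j $ f * x$j) * incidence src dst $ i $ f)" for i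
  proof -
    have "(\<Sum>j\<in>UNIV. (\<Sum>f\<in>UNIV. incidence src dst $ i $ f * w f * incidence src dst $ j $ f) * x$j)
        = (\<Sum>j\<in>UNIV. \<Sum>f\<in>UNIV. incidence src dst $ i $ f * w f * incidence src dst $ j $ f * x$j)"
      by (simp add: sum_distrib_right)
    also have "\<dots> = (\<Sum>f\<in>UNIV. \<Sum>j\<in>UNIV. incidence src dst $ i $ f * w f * incidence src dst $ j $ f * x$j)"
      by (rule sum.swap)
    also have "\<dots> = (\<Sum>f\<in>UNIV. w f * (\<Sum>j\<in>UNIV. incidence src dst $ j $ f * x$j) * incidence src dst $ i $ f)"
      by (simp add: sum_distrib_left sum_distrib_right mult_ac)
    finally show ?thesis .
  qed
  thus ?thesis by (simp add: matrix_vector_mult_def lap_nth vec_eq_iff Ecol_def inner_vec_def)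
qed

lemma lap_quad: "x \<bullet> (laplacian src dst w *v x) = (\<Sum>f\<in>UNIV. w f * (Ecol src dst f \<bullet> x)^2)"
  unfolding lap_vec inner_sum_right by (simp add: inner_commute[of x] power2_eq_square mult.assoc)

lemma lap_sym: "transpose (laplacian src dst w) = laplacian src dst w"
  by (simp add: vec_eq_iff transpose_def lap_nth mult_ac)

lemma Ecol_inner:
  assumes "simple_graph src dst"
  shows "Ecol src dst f \<bullet> x = x $ src f - x $ dst f"
proof -
  have sd: "src f \<noteq> dst f" using assms by (simp add: simple_graph_def)
  have "Ecol src dst f \<bullet> x = (\<Sum>i\<in>UNIV. (if i = src f then 1 else if i = dst f then -1 else 0) * x$i)"
    by (simp add: Ecol_def inner_vec_def incidence_def)
  also have "\<dots> = (\<Sum>i\<in>UNIV. (if i = src f then x$i else 0) + (if i = dst f then - x$i else 0))"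
    by (intro sum.cong refl) (use sd in auto)
  also have "\<dots> = x $ src f - x $ dst f" by (simp add: sum.distrib)
  finally show ?thesis .
qed

lemma const_of_conn:
  fixes x :: "real^'n::finite" and src dst :: "'e::finite \<Rightarrow> 'n"
  assumes "graph_connected src dst" and "\<And>f. x $ src f = x $ dst f"
  shows "x $ u = x $ v"
proof -
  have "(u, v) \<in> (adj_rel src dst)\<^sup>*" using assms(1) by (simp add: graph_connected_def)
  thus ?thesis
  proof (induction rule: rtrancl_induct)
    case base thus ?case by simp
  next
    case (step y z)
    hence "x $ y = x $ z" using assms(2) by (auto simp: adj_rel_def)
    thus ?case using step.IH by simp
  qed
qed


context onb
begin

lemma GSm_mpow: "mpow (GSm f) k = GSm (\<lambda>b. f b ^ k)"
  by (induction k) (simp_all add: GSm_one GSm_mult)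

definition outer :: "real^'n \<Rightarrow> real^'n^'n" where "outer b = (\<chi> i j. b$i * b$j)"

lemma GSm_sum: "(GSm f :: real^'n^'n) = (\<Sum>b\<in>B. f b *\<^sub>R outer b)"
  by (simp add: GSm_def outer_def vec_eq_iff)

lemma GSm_cos: "mat_cos (GSm g :: real^'n^'n) = GSm (\<lambda>b. cos (g b))"
proof -
  have "(\<lambda>k. ((-1) ^ k / fact (2 * k)) *\<^sub>R mpow (GSm g) (2 * k)) =
        (\<lambda>k. \<Sum>b\<in>B. ((-1) ^ k / fact (2 * k) * g b ^ (2 * k)) *\<^sub>R outer b)"
    unfolding GSm_mpow unfolding GSm_scaleR unfolding GSm_sum by simp
  moreover have "(\<lambda>k. \<Sum>b\<in>B. ((-1) ^ k / fact (2 * k) * g b ^ (2 * k)) *\<^sub>R outer b) sums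
        (\<Sum>b\<in>B. cos (g b) *\<^sub>R outer b)"
    by (intro sums_sum sums_scaleR_left cos_paired)
  ultimately have "(\<lambda>k. ((-1) ^ k / fact (2 * k)) *\<^sub>R mpow (GSm g) (2 * k)) sums GSm (\<lambda>b. cos (g b))"
    by (simp add: GSm_sum)
  thus ?thesis by (simp add: mat_cos_def sums_iff)
qed

lemma GSm_sin: "mat_sin (GSm g :: real^'n^'n) = GSm (\<lambda>b. sin (g b))"
proof -
  have "(\<lambda>k. ((-1) ^ k / fact (2 * k + 1)) *\<^sub>R mpow (GSm g) (2 * k + 1)) =
        (\<lambda>k. \<Sum>b\<in>B. ((-1) ^ k / fact (2 * k + 1) * g b ^ (2 * k + 1)) *\<^sub>R outer b)"
    unfolding GSm_mpow unfolding GSm_scaleR unfolding GSm_sum by simp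
  moreover have "(\<lambda>k. \<Sum>b\<in>B. ((-1) ^ k / fact (2 * k + 1) * g b ^ (2 * k + 1)) *\<^sub>R outer b) sums
        (\<Sum>b\<in>B. sin (g b) *\<^sub>R outer b)"
    by (intro sums_sum sums_scaleR_left sin_paired)
  ultimately have "(\<lambda>k. ((-1) ^ k / fact (2 * k + 1)) *\<^sub>R mpow (GSm g) (2 * k + 1)) sums GSm (\<lambda>b. sin (g b))"
    by (simp add: GSm_sum)
  thus ?thesis by (simp add: mat_sin_def sums_iff)
qed

lemma cmat_GSm: "cmat (GSm f :: real^'n^'n) = GSm (\<lambda>b. complex_of_real (f b))"
  by (simp add: cmat_def GSm_def vec_eq_iff)

lemma GSm_cmat_nth:
  fixes K :: "real^'c::finite^'n"
  shows "(GSm h ** cmat K) $ i $ f = (\<Sum>b\<in>B. h b * of_real (b$i * (b \<bullet> (\<chi> k. K$k$f))))"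
proof -
  have "(GSm h ** cmat K) $ i $ f = (\<Sum>k\<in>UNIV. \<Sum>b\<in>B. h b * of_real (b$i * b$k) * of_real (K$k$f))"
    by (simp add: matrix_matrix_mult_def GSm_def cmat_def sum_distrib_right)
  also have "\<dots> = (\<Sum>b\<in>B. \<Sum>k\<in>UNIV. h b * of_real (b$i * b$k) * of_real (K$k$f))"
    by (rule sum.swap)
  also have "\<dots> = (\<Sum>b\<in>B. h b * of_real (b$i * (b \<bullet> (\<chi> k. K$k$f))))"
  proof (intro sum.cong refl)
    fix b
    show "(\<Sum>k\<in>UNIV. h b * of_real (b$i * b$k) * of_real (K$k$f)) = h b * of_real (b$i * (b \<bullet> (\<chi> k. K$k$f)))"
      by (simp add: inner_vec_def sum_distrib_left of_real_sum mult_ac)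
  qed
  finally show ?thesis .
qed

lemma trace_GSm:
  fixes K :: "real^'c::finite^'n"
  shows "trace (conj_transpose (GSm h ** cmat K) ** (GSm h ** cmat K)) =
         of_real (\<Sum>f\<in>UNIV. \<Sum>b\<in>B. (cmod (h b))^2 * (b \<bullet> (\<chi> k. K$k$f))^2)"
proof -
  define c where "c b f = b \<bullet> (\<chi> k. K$k$f)" for b f
  have "(\<Sum>i\<in>UNIV. cnj ((GSm h ** cmat K) $ i $ f) * (GSm h ** cmat K) $ i $ f)
        = of_real (\<Sum>b\<in>B. (cmod (h b))^2 * (c b f)^2)" for f
  proof -
    have "(\<Sum>i\<in>UNIV. cnj ((GSm h ** cmat K) $ i $ f) * (GSm h ** cmat K) $ i $ f)
        = (\<Sum>i\<in>UNIV. (\<Sum>b\<in>B. cnj (h b) * of_real (b$i * c b f)) * (\<Sum>b'\<in>B. h b' * of_real (b'$i * c b' f)))"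
      by (simp add: GSm_cmat_nth c_def cnj_sum)
    also have "\<dots> = (\<Sum>i\<in>UNIV. \<Sum>b\<in>B. \<Sum>b'\<in>B. cnj (h b) * h b' * of_real (c b f * c b' f) * of_real (b$i * b'$i))"
      unfolding sum_product by (intro sum.cong refl) (simp add: mult_ac)
    also have "\<dots> = (\<Sum>b\<in>B. \<Sum>b'\<in>B. cnj (h b) * h b' * of_real (c b f * c b' f) * of_real (\<Sum>i\<in>UNIV. b$i * b'$i))"
      by (simp add: sum.swap[of _ UNIV] sum_distrib_left)
    also have "\<dots> = (\<Sum>b\<in>B. \<Sum>b'\<in>B. if b = b' then cnj (h b) * h b' * of_real (c b f * c b' f) else 0)"
      by (intro sum.cong refl) (simp add: K2)
    also have "\<dots> = (\<Sum>b\<in>B. cnj (h b) * h b * of_real (c b f * c b f))"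
      using finB by (simp add: sum.delta)
    also have "\<dots> = of_real (\<Sum>b\<in>B. (cmod (h b))^2 * (c b f)^2)"
    proof -
      have "cnj (h b) * h b = of_real ((cmod (h b))^2)" for b
        using complex_norm_square[of "h b"] by (simp add: mult.commute)
      thus ?thesis by (simp add: of_real_sum power2_eq_square)
    qed
    finally show ?thesis .
  qed
  thus ?thesis
    by (simp add: trace_def matrix_matrix_mult_def conj_transpose_def c_def of_real_sum)
qed

end


lemma pinv_eqI:
  fixes X :: "real^'m::finite^'n::finite" and Y :: "real^'n^'m"
  assumes a1: "X ** Y ** X = X" and a2: "Y ** X ** Y = Y"
    and a3: "transpose (X ** Y) = X ** Y" and a4: "transpose (Y ** X) = Y ** X"
  shows "pinv X = Y"
  unfolding pinv_def
proof (rule the_equality)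
  show "X ** Y ** X = X \<and> Y ** X ** Y = Y \<and> transpose (X ** Y) = X ** Y \<and> transpose (Y ** X) = Y ** X"
    using assms by blast
  fix Z assume "X ** Z ** X = X \<and> Z ** X ** Z = Z \<and> transpose (X ** Z) = X ** Z \<and> transpose (Z ** X) = Z ** X"
  hence z1: "X ** Z ** X = X" and z2: "Z ** X ** Z = Z" and z3: "transpose (X ** Z) = X ** Z"
    and z4: "transpose (Z ** X) = Z ** X" by auto
  have tX1: "transpose X = transpose X ** (X ** Y)"
  proof -
    have "transpose X = transpose (X ** Y ** X)" using a1 by simp
    also have "\<dots> = transpose X ** transpose (X ** Y)" by (simp only: matrix_transpose_mul)
    finally show ?thesis using a3 by simp
  qed
  have tX2: "transpose X = (Z ** X) ** transpose X"
  proof -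
    have "transpose X = transpose (X ** (Z ** X))" using z1 by (simp add: matrix_mul_assoc)
    also have "\<dots> = transpose (Z ** X) ** transpose X" by (simp only: matrix_transpose_mul)
    finally show ?thesis using z4 by simp
  qed
  have "Z = Z ** (X ** Z)" using z2 by (simp add: matrix_mul_assoc)
  also have "\<dots> = Z ** transpose (X ** Z)" using z3 by simp
  also have "\<dots> = Z ** (transpose Z ** transpose X)" by (simp only: matrix_transpose_mul)
  also have "\<dots> = Z ** (transpose Z ** (transpose X ** (X ** Y)))" using tX1 by simp
  also have "\<dots> = Z ** (transpose (X ** Z) ** (X ** Y))" by (simp add: matrix_transpose_mul matrix_mul_assoc)
  also have "\<dots> = (Z ** X ** Z) ** X ** Y" using z3 by (simp add: matrix_mul_assoc)
  also have "\<dots> = Z ** X ** Y" using z2 by simp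
  finally have zz: "Z = Z ** X ** Y" .
  have "Y = (Y ** X) ** Y" using a2 by simp
  also have "\<dots> = transpose (Y ** X) ** Y" using a4 by simp
  also have "\<dots> = transpose X ** transpose Y ** Y" by (simp only: matrix_transpose_mul)
  also have "\<dots> = (Z ** X) ** transpose X ** transpose Y ** Y" using tX2 by simp
  also have "\<dots> = (Z ** X) ** transpose (Y ** X) ** Y" by (simp add: matrix_transpose_mul matrix_mul_assoc)
  also have "\<dots> = Z ** X ** (Y ** X ** Y)" using a4 by (simp add: matrix_mul_assoc)
  also have "\<dots> = Z ** X ** Y" using a2 by simp
  finally show "Z = Y" using zz by simp
qed


locale net = onb B for B :: "(real^'n::finite) set" +
  fixes src dst :: "'e::finite \<Rightarrow> 'n" and w :: "'e \<Rightarrow> real" and tau :: real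
  assumes sg: "simple_graph src dst" and conn: "graph_connected src dst"
    and wpos: "\<And>f. w f > 0" and tau0: "tau \<ge> 0"
    and tl: "tau * largest_eigenvalue (laplacian src dst w) < pi/2"
    and eig: "\<And>b. b \<in> B \<Longrightarrow> laplacian src dst w *v b = (b \<bullet> (laplacian src dst w *v b)) *\<^sub>R b"
begin

definition "lam b = b \<bullet> (laplacian src dst w *v b)"
definition "mm b = (if lam b = 0 then 0 else (1::real))"

lemma eigL: "b \<in> B \<Longrightarrow> laplacian src dst w *v b = lam b *\<^sub>R b"
  unfolding lam_def by (rule eig)

lemma L_GSm: "laplacian src dst w = GSm lam"
  by (rule real_GSm_eqI) (rule eigL)

lemma lam_quad: "lam b = (\<Sum>f\<in>UNIV. w f * (Ecol src dst f \<bullet> b)^2)"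
  by (simp add: lam_def lap_quad)

lemma lam_nonneg: "lam b \<ge> 0"
  unfolding lam_quad using wpos by (intro sum_nonneg) (simp add: less_imp_le)

lemma eigenvalues_sub: "eigenvalues (laplacian src dst w) \<subseteq> lam ` B"
proof
  fix c assume "c \<in> eigenvalues (laplacian src dst w)"
  then obtain v where v: "v \<noteq> 0" "laplacian src dst w *v v = c *\<^sub>R v" by (auto simp: eigenvalues_def)
  have "\<exists>b\<in>B. b \<bullet> v \<noteq> 0"
  proof (rule ccontr)
    assume "\<not> ?thesis"
    hence "(\<Sum>b\<in>B. (b \<bullet> v) *\<^sub>R b) = 0" by simp
    thus False using v(1) expand[of v] by argo
  qed
  then obtain b where b: "b \<in> B" "b \<bullet> v \<noteq> 0" by blast
  have "c * (b \<bullet> v) = b \<bullet> (laplacian src dst w *v v)" using v(2) by simp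
  also have "\<dots> = (laplacian src dst w *v b) \<bullet> v" by (rule sym_inner[OF lap_sym])
  also have "\<dots> = lam b * (b \<bullet> v)" using eigL[OF b(1)] by simp
  finally have "c = lam b" using b(2) by simp
  thus "c \<in> lam ` B" using b(1) by blast
qed

lemma lam_le: "b \<in> B \<Longrightarrow> lam b \<le> largest_eigenvalue (laplacian src dst w)"
proof -
  assume b: "b \<in> B"
  have "b \<noteq> 0" using nrm[OF b] by auto
  hence "lam b \<in> eigenvalues (laplacian src dst w)"
    using eigL[OF b] by (auto simp: eigenvalues_def)
  moreover have "finite (eigenvalues (laplacian src dst w))"
    using eigenvalues_sub finB finite_subset by blast
  ultimately show ?thesis unfolding largest_eigenvalue_def by simp
qed

lemma tau_lam: "b \<in> B \<Longrightarrow> tau * lam b < pi / 2"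
proof -
  assume b: "b \<in> B"
  have "tau * lam b \<le> tau * largest_eigenvalue (laplacian src dst w)"
    using lam_le[OF b] tau0 by (rule mult_left_mono)
  thus ?thesis using tl by simp
qed

lemma lam0_Ecol: "lam b = 0 \<Longrightarrow> Ecol src dst f \<bullet> b = 0"
proof -
  assume "lam b = 0"
  hence "(\<Sum>f\<in>UNIV. w f * (Ecol src dst f \<bullet> b)^2) = 0" by (simp add: lam_quad)
  moreover have "\<forall>f\<in>UNIV. 0 \<le> w f * (Ecol src dst f \<bullet> b)^2" using wpos by (simp add: less_imp_le)
  ultimately have "w f * (Ecol src dst f \<bullet> b)^2 = 0"
    using sum_nonneg_eq_0_iff[of "UNIV::'e set" "\<lambda>f. w f * (Ecol src dst f \<bullet> b)^2"] by auto
  thus ?thesis using wpos[of f] by simp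
qed

lemma cent_vec: "(centering :: real^'n^'n) *v x = x - ((\<Sum>j\<in>UNIV. x$j) / real CARD('n)) *\<^sub>R (\<chi> i. 1)"
proof -
  have "(centering *v x) $ i = (\<Sum>j\<in>UNIV. (if i = j then 1 else 0) * x$j) - (\<Sum>j\<in>UNIV. (1 / real CARD('n)) * x$j)" for i
    by (simp add: centering_def matrix_vector_mult_def mat_def left_diff_distrib sum_subtractf)
  hence "(centering *v x) $ i = x$i - (\<Sum>j\<in>UNIV. x$j) / real CARD('n)" for i
    by (simp add: sum_distrib_left[symmetric] sum_divide_distrib[symmetric] if_distrib[of "\<lambda>z. z * _"] cong: if_cong)
  thus ?thesis by (simp add: vec_eq_iff)
qed

lemma cent_lam0: "lam b = 0 \<Longrightarrow> (centering :: real^'n^'n) *v b = 0"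
proof -
  assume l0: "lam b = 0"
  have c: "b $ u = b $ v" for u v
  proof -
    have "b $ src f = b $ dst f" for f using lam0_Ecol[OF l0, of f] Ecol_inner[OF sg, of f b] by simp
    thus ?thesis by (rule const_of_conn[OF conn])
  qed
  have "(\<Sum>j\<in>UNIV. b$j) = real CARD('n) * b $ i" for i
  proof -
    have "(\<Sum>j\<in>UNIV. b$j) = (\<Sum>j\<in>(UNIV::'n set). b$i)" by (rule sum.cong) (auto intro: c)
    thus ?thesis by simp
  qed
  moreover have "real CARD('n) > 0" by simp
  ultimately have hb: "b $ i - (\<Sum>j\<in>UNIV. b$j) / real CARD('n) = 0" for i by (simp add: field_simps)
  show ?thesis unfolding cent_vec vec_eq_iff
  proof
    fix i
    show "(b - ((\<Sum>j\<in>UNIV. b$j) / real CARD('n)) *\<^sub>R (\<chi> i. 1)) $ i = 0 $ i"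
      using hb[of i] by (simp only: vector_minus_component vector_scaleR_component vec_lambda_beta zero_index real_scaleR_def mult_1_right)
  qed
qed

lemma cent_lampos:
  assumes b: "b \<in> B" and l: "lam b \<noteq> 0"
  shows "(centering :: real^'n^'n) *v b = b"
proof -
  define one where "one = (\<chi> i::'n. (1::real))"
  have "Ecol src dst f \<bullet> one = 0" for f by (simp add: Ecol_inner[OF sg] one_def)
  hence L1: "laplacian src dst w *v one = 0" by (simp add: lap_vec)
  have "lam b * (one \<bullet> b) = one \<bullet> (laplacian src dst w *v b)" using eigL[OF b] by simp
  also have "\<dots> = (laplacian src dst w *v one) \<bullet> b" by (rule sym_inner[OF lap_sym])
  also have "\<dots> = 0" using L1 by simp
  finally have "one \<bullet> b = 0" using l by simp
  hence "(\<Sum>j\<in>UNIV. b$j) = 0" by (simp add: one_def inner_vec_def)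
  thus ?thesis by (simp add: cent_vec)
qed

lemma cent_GSm: "(centering :: real^'n^'n) = GSm mm"
  by (rule real_GSm_eqI) (auto simp: mm_def cent_lam0 cent_lampos)


definition "Ival b = pi * cos (lam b * tau) / (lam b * (1 - sin (lam b * tau)))"
definition "mu b = lam b * inverse (cos (tau * lam b)) * (mm b - sin (tau * lam b))"
definition "nu b = (if mu b = 0 then 0 else inverse (mu b))"

lemma tl_bounds: "b \<in> B \<Longrightarrow> 0 \<le> tau * lam b \<and> tau * lam b < pi / 2"
  using tau_lam tau0 lam_nonneg by simp

lemma cos_pos: "b \<in> B \<Longrightarrow> cos (tau * lam b) > 0"
proof -
  assume b: "b \<in> B"
  from tl_bounds[OF b] pi_gt_zero show ?thesis by (intro cos_gt_zero_pi) linarith+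
qed

lemma sin_lt: "b \<in> B \<Longrightarrow> sin (tau * lam b) < 1"
proof -
  assume b: "b \<in> B"
  have "sin (tau * lam b) < sin (pi / 2)" using tl_bounds[OF b] by (intro sin_monotone_2pi) auto
  thus ?thesis by simp
qed

lemma X_GSm:
  "laplacian src dst w ** matrix_inv (mat_cos (tau *\<^sub>R laplacian src dst w)) **
     (centering - mat_sin (tau *\<^sub>R laplacian src dst w)) = GSm mu"
proof -
  have tL: "tau *\<^sub>R laplacian src dst w = GSm (\<lambda>b. tau * lam b)"
    by (simp add: L_GSm GSm_scaleR)
  have ci: "matrix_inv (GSm (\<lambda>b. cos (tau * lam b))) = GSm (\<lambda>b. inverse (cos (tau * lam b)))"
    by (rule GSm_inv) (use cos_pos in force)
  show ?thesis
    unfolding tL unfolding GSm_cos GSm_sin ci cent_GSm unfolding L_GSm GSm_diff GSm_mult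
    by (rule GSm_cong) (simp add: mu_def)
qed

lemma pinv_X: "pinv (GSm mu) = GSm nu"
proof (rule pinv_eqI)
  show "GSm mu ** GSm nu ** GSm mu = GSm mu" unfolding GSm_mult by (rule GSm_cong) (simp add: nu_def)
  show "GSm nu ** GSm mu ** GSm nu = GSm nu" unfolding GSm_mult by (rule GSm_cong) (simp add: nu_def)
  show "transpose (GSm mu ** GSm nu) = GSm mu ** GSm nu" by (simp add: GSm_mult GSm_transpose)
  show "transpose (GSm nu ** GSm mu) = GSm nu ** GSm mu" by (simp add: GSm_mult GSm_transpose)
qed

lemma nu_val: "b \<in> B \<Longrightarrow> nu b = mm b * Ival b / pi"
proof -
  assume b: "b \<in> B"
  show ?thesis
  proof (cases "lam b = 0")
    case True thus ?thesis by (simp add: nu_def mu_def mm_def)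
  next
    case False
    hence lp: "lam b > 0" using lam_nonneg[of b] by simp
    have c: "cos (tau * lam b) > 0" using cos_pos[OF b] .
    have s: "1 - sin (tau * lam b) > 0" using sin_lt[OF b] by simp
    have mu_eq: "mu b = lam b * (1 - sin (tau * lam b)) / cos (tau * lam b)"
      using False by (simp add: mu_def mm_def field_simps)
    have "mu b \<noteq> 0" using mu_eq lp c s by simp
    hence "nu b = inverse (mu b)" by (simp add: nu_def)
    also have "\<dots> = cos (tau * lam b) / (lam b * (1 - sin (tau * lam b)))" using mu_eq by simp
    also have "\<dots> = mm b * Ival b / pi"
      using False unfolding Ival_def mm_def mult.commute[of "lam b" tau] by simp
    finally show ?thesis .
  qed
qed

lemma reff_formula:
  "r_eff (laplacian src dst w ** matrix_inv (mat_cos (tau *\<^sub>R laplacian src dst w)) **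
     (centering - mat_sin (tau *\<^sub>R laplacian src dst w))) (src e) (dst e)
   = (\<Sum>b\<in>B. mm b * Ival b / pi * (Ecol src dst e \<bullet> b)^2)"
proof -
  have "r_eff (GSm mu) (src e) (dst e) = (\<Sum>b\<in>B. nu b * (b $ src e * b $ src e) + nu b * (b $ dst e * b $ dst e)
           - 2 * (nu b * (b $ src e * b $ dst e)))"
    by (simp add: r_eff_def pinv_X GSm_nth sum.distrib sum_subtractf sum_distrib_left)
  also have "\<dots> = (\<Sum>b\<in>B. nu b * (Ecol src dst e \<bullet> b)^2)"
    by (intro sum.cong refl) (simp add: Ecol_inner[OF sg] power2_eq_square algebra_simps)
  also have "\<dots> = (\<Sum>b\<in>B. mm b * Ival b / pi * (Ecol src dst e \<bullet> b)^2)"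
    by (intro sum.cong refl) (simp add: nu_val)
  finally show ?thesis by (simp add: X_GSm)
qed


lemma mult_diag_nth: "(A ** diag_mat d) $ i $ j = A $ i $ j * d j"
proof -
  have "(A ** diag_mat d) $ i $ j = (\<Sum>k\<in>UNIV. if k = j then A $ i $ k * d k else 0)"
    by (simp add: matrix_matrix_mult_def diag_mat_def if_distrib[of "\<lambda>z. _ * z"] cong: if_cong)
  thus ?thesis by simp
qed

lemma Kcol: "(\<chi> k. (incidence src dst ** diag_mat w ** diag_mat d) $ k $ f) = (w f * d f) *\<^sub>R Ecol src dst f"
  by (simp add: vec_eq_iff mult_diag_nth Ecol_def)

definition "zf om b = \<i> * of_real om + exp (- of_real tau * (\<i> * of_real om)) * of_real (lam b)"

lemma zf_Ach: "zf om b = Ach (lam b) tau (\<i> * of_real om)"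
  by (simp add: zf_def Ach_def mult.commute)

lemma zf_nonzero: "b \<in> B \<Longrightarrow> om \<noteq> 0 \<Longrightarrow> zf om b \<noteq> 0"
proof -
  assume b: "b \<in> B" and om: "om \<noteq> 0"
  show ?thesis
  proof (cases "lam b = 0")
    case True thus ?thesis using om by (simp add: zf_def)
  next
    case False
    hence "lam b > 0" using lam_nonneg[of b] by simp
    moreover have "lam b * tau < pi / 2" using tau_lam[OF b] by (simp add: mult.commute)
    ultimately show ?thesis unfolding zf_Ach by (intro Ach_nonzero tau0) auto
  qed
qed

lemma transfer_GSm:
  assumes om: "om \<noteq> 0"
  shows "transfer src dst w tau sig (\<i> * of_real om) =
         GSm (\<lambda>b. of_real (mm b) * inverse (zf om b)) **
         cmat (incidence src dst ** diag_mat w ** diag_mat (\<lambda>e. sqrt (sig e)))"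
proof -
  have T: "mat (\<i> * of_real om) + mat (exp (- of_real tau * (\<i> * of_real om))) ** cmat (laplacian src dst w)
           = GSm (zf om)"
  proof -
    have 1: "mat (exp (- of_real tau * (\<i> * of_real om))) ** cmat (laplacian src dst w)
          = GSm (\<lambda>b. exp (- of_real tau * (\<i> * of_real om)) * of_real (lam b))"
      by (simp only: L_GSm cmat_GSm mat_GSm)
    have 2: "mat (\<i> * of_real om) = GSm (\<lambda>b. \<i> * of_real om)" by (simp only: GSm_const)
    show ?thesis unfolding 1 2 GSm_add zf_def[abs_def] ..
  qed
  have inv: "matrix_inv (GSm (zf om)) = GSm (\<lambda>b. inverse (zf om b))"
    by (rule GSm_inv) (use zf_nonzero om in auto)
  show ?thesis
    unfolding transfer_def T inv cent_GSm cmat_GSm GSm_mult by simp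
qed

lemma integrand_eq:
  assumes om: "om \<noteq> 0"
  shows "Re (trace (conj_transpose (transfer src dst w tau sig (\<i> * of_real om)) **
                    transfer src dst w tau sig (\<i> * of_real om)))
       = (\<Sum>f\<in>UNIV. \<Sum>b\<in>B. (mm b * (1 / (cmod (Ach (lam b) tau (\<i> * of_real om)))^2)) *
                             ((w f * sqrt (sig f))^2 * (Ecol src dst f \<bullet> b)^2))"
proof -
  have h: "(cmod (of_real (mm b) * inverse (zf om b)))^2 = mm b * (1 / (cmod (Ach (lam b) tau (\<i> * of_real om)))^2)" for b
    by (simp add: mm_def zf_Ach norm_mult norm_inverse power_one_over inverse_eq_divide norm_divide)
  show ?thesis
    unfolding transfer_GSm[OF om] trace_GSm Kcol
    by (simp add: h inner_commute power_mult_distrib mult_ac)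
qed


lemma term_int:
  assumes b: "b \<in> B"
  shows "((\<lambda>om. mm b * (1 / (cmod (Ach (lam b) tau (\<i> * of_real om)))^2)) has_integral (mm b * Ival b)) UNIV"
proof (cases "lam b = 0")
  case True thus ?thesis by (simp add: mm_def)
next
  case False
  hence lp: "lam b > 0" using lam_nonneg[of b] by simp
  have "lam b * tau < pi / 2" using tau_lam[OF b] by (simp add: mult.commute)
  from scalar_integral[OF lp tau0 this] show ?thesis using False by (simp add: mm_def Ival_def)
qed

lemma rho_formula:
  "rho_ss src dst w tau sig = 1 / (2 * pi) *
     (\<Sum>f\<in>UNIV. \<Sum>b\<in>B. (mm b * Ival b) * ((w f * sqrt (sig f))^2 * (Ecol src dst f \<bullet> b)^2))"
proof -
  let ?g = "\<lambda>om. \<Sum>f\<in>UNIV. \<Sum>b\<in>B. (mm b * (1 / (cmod (Ach (lam b) tau (\<i> * of_real om)))^2)) *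
                             ((w f * sqrt (sig f))^2 * (Ecol src dst f \<bullet> b)^2)"
  have "(?g has_integral (\<Sum>f\<in>UNIV. \<Sum>b\<in>B. (mm b * Ival b) * ((w f * sqrt (sig f))^2 * (Ecol src dst f \<bullet> b)^2))) UNIV"
    by (intro has_integral_sum has_integral_mult_left term_int) (simp_all add: finB)
  hence "((\<lambda>om. Re (trace (conj_transpose (transfer src dst w tau sig (\<i> * of_real om)) **
                    transfer src dst w tau sig (\<i> * of_real om)))) has_integral
          (\<Sum>f\<in>UNIV. \<Sum>b\<in>B. (mm b * Ival b) * ((w f * sqrt (sig f))^2 * (Ecol src dst f \<bullet> b)^2))) UNIV"
  proof (rule has_integral_spike_finite[of "{0}", rotated 2])
    fix om :: real assume "om \<in> UNIV - {0}"
    thus "Re (trace (conj_transpose (transfer src dst w tau sig (\<i> * of_real om)) **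
                    transfer src dst w tau sig (\<i> * of_real om))) = ?g om"
      by (intro integrand_eq) auto
  qed simp
  thus ?thesis unfolding rho_ss_def by (simp add: integral_unique)
qed


definition "Qf f = (\<Sum>b\<in>B. (mm b * Ival b) * (Ecol src dst f \<bullet> b)^2)"

lemma rho_Q: "rho_ss src dst w tau sig = 1 / (2 * pi) * (\<Sum>f\<in>UNIV. (w f * sqrt (sig f))^2 * Qf f)"
  unfolding rho_formula Qf_def by (simp add: sum_distrib_left mult_ac)

lemma deriv_main:
  assumes s: "sigma2 e > 0"
  shows "((\<lambda>t. rho_ss src dst w tau (sigma2(e := t))) has_real_derivative
           (1/2 * (w e)^2 *
            r_eff (laplacian src dst w ** matrix_inv (mat_cos (tau *\<^sub>R laplacian src dst w))
                   ** (centering - mat_sin (tau *\<^sub>R laplacian src dst w)))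
                  (src e) (dst e)))
         (at (sigma2 e))"
proof -
  define C where "C = 1 / (2 * pi) * (\<Sum>f\<in>UNIV - {e}. (w f * sqrt (sigma2 f))^2 * Qf f)"
  define K where "K = 1 / (2 * pi) * ((w e)^2 * Qf e)"
  have eq: "rho_ss src dst w tau (sigma2(e := t)) = C + K * t" if t: "t \<in> {0<..}" for t
  proof -
    have "(\<Sum>f\<in>UNIV. (w f * sqrt ((sigma2(e := t)) f))^2 * Qf f)
        = (w e * sqrt t)^2 * Qf e + (\<Sum>f\<in>UNIV - {e}. (w f * sqrt (sigma2 f))^2 * Qf f)"
      by (subst sum.remove[of UNIV e]) (auto intro!: sum.cong)
    also have "(w e * sqrt t)^2 = (w e)^2 * t" using t by (simp add: power_mult_distrib)
    finally show ?thesis unfolding rho_Q C_def K_def by (simp add: algebra_simps)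
  qed
  have d: "((\<lambda>t. C + K * t) has_real_derivative K) (at (sigma2 e))"
    by (auto intro!: derivative_eq_intros)
  have "((\<lambda>t. rho_ss src dst w tau (sigma2(e := t))) has_real_derivative K) (at (sigma2 e))"
    by (rule has_field_derivative_transform_within_open[OF d open_greaterThan]) (use s eq in auto)
  moreover have "K = 1/2 * (w e)^2 *
            r_eff (laplacian src dst w ** matrix_inv (mat_cos (tau *\<^sub>R laplacian src dst w))
                   ** (centering - mat_sin (tau *\<^sub>R laplacian src dst w))) (src e) (dst e)"
    unfolding reff_formula K_def Qf_def by (simp add: sum_divide_distrib sum_distrib_left mult_ac)
  ultimately show ?thesis by simp
qed

end


theorem theorem9:
  fixes src dst :: "'e::finite \<Rightarrow> 'n::finite"
    and w :: "'e \<Rightarrow> real" and \<tau> :: real and sigma2 :: "'e \<Rightarrow> real" and e :: 'e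
  assumes "simple_graph src dst"
    and "graph_connected src dst"
    and "\<And>f. w f > 0"
    and "\<tau> \<ge> 0"
    and "\<tau> * largest_eigenvalue (laplacian src dst w) < pi / 2"
    and "\<And>f. sigma2 f > 0"
  shows "((\<lambda>t. rho_ss src dst w \<tau> (sigma2(e := t))) has_real_derivative
           (1/2 * (w e)^2 *
            r_eff (laplacian src dst w ** matrix_inv (mat_cos (\<tau> *\<^sub>R laplacian src dst w))
                   ** (centering - mat_sin (\<tau> *\<^sub>R laplacian src dst w)))
                  (src e) (dst e)))
         (at (sigma2 e))"
proof -
  obtain B where B: "finite B" "\<forall>b\<in>B. b \<bullet> b = 1" "\<forall>b\<in>B. \<forall>b'\<in>B. b \<noteq> b' \<longrightarrow> b \<bullet> b' = 0"
      "\<forall>b\<in>B. laplacian src dst w *v b = (b \<bullet> (laplacian src dst w *v b)) *\<^sub>R b"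
      "\<forall>x. x = (\<Sum>b\<in>B. (b \<bullet> x) *\<^sub>R b)"
    using spectral[OF lap_sym[of src dst w]] by blast
  interpret net B src dst w \<tau>
  proof (unfold_locales)
    show "finite B" by (rule B(1))
    show "\<And>b. b \<in> B \<Longrightarrow> b \<bullet> b = 1" using B(2) by blast
    show "\<And>b b'. b \<in> B \<Longrightarrow> b' \<in> B \<Longrightarrow> b \<noteq> b' \<Longrightarrow> b \<bullet> b' = 0" using B(3) by blast
    show "\<And>x. x = (\<Sum>b\<in>B. (b \<bullet> x) *\<^sub>R b)" using B(5) by blast
    show "\<And>b. b \<in> B \<Longrightarrow> laplacian src dst w *v b = (b \<bullet> (laplacian src dst w *v b)) *\<^sub>R b"
      using B(4) by blast
  qed (use assms in auto)
  show ?thesis by (rule deriv_main) (use assms in auto)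
qed

end
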